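(* There does not exist a quantum auxiliary-input commitment scheme that is simultaneously statistically hiding and statistically sum-binding.
   Context: A (non-interactive) quantum auxiliary-input commitment scheme consists of QPT algorithms $C$, $R$ and a family $\{\ket{\psi_\lambda}\}_{\lambda}$ of $\mathrm{poly}(\lambda)$-qubit states (not necessarily efficiently generatable); one copy of $\ket{\psi_\lambda}$ is given to each of $C$ and $R$. Commit: $C$ on input $b\in\{0,1\}$ generates a state on registers $\mathbf{C},\mathbf{R}$ and sends $\mathbf{C}$. Reveal: $C$ sends $b$ and $\mathbf{R}$; $R$ outputs $b$ (accept) or $\bot$. Correctness: honest runs accept with probability 1. Statistical hiding: for every non-uniform unbounded-time algorithm $\{\mathcal{A}_\lambda,\rho_\lambda\}$ (with polynomial-size quantum advice $\rho_\lambda$), the advantage of distinguishing $\mathrm{Tr}_{\mathbf{R}}\sigma^{(0)}$ from $\mathrm{Tr}_{\mathbf{R}}\sigma^{(1)}$ is $\mathsf{negl}(\lambda)$, where $\sigma^{(b)}$ is the honest commit state for $b$. Statistical sum-binding: for any pair of non-uniform unbounded-time malicious committers $C_0^*,C_1^*$ taking $\ket{\psi_\lambda}$ as input and acting identically in the commit phase, with $p_b$ the probability that $R$ accepts revealed bit $b$ from $C_b^*$, $p_0+p_1\le1+\mathsf{negl}(\lambda)$. *)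

theory Defs
  imports "Jordan_Normal_Form.Matrix" Complex_Main
begin

text \<open>A system of n qubits has Hilbert space C^(2^n).
  Composite systems use the Kronecker product with the first factor as most significant
  index (register order as written, e.g. C (x) R).\<close>

definition adj :: "complex mat \<Rightarrow> complex mat" where
  "adj A = mat (dim_col A) (dim_row A) (\<lambda>(i,j). cnj (A $$ (j,i)))"

definition tr :: "complex mat \<Rightarrow> complex" where
  "tr A = (\<Sum>i<dim_row A. A $$ (i,i))"

definition kron :: "complex mat \<Rightarrow> complex mat \<Rightarrow> complex mat" where
  "kron A B = mat (dim_row A * dim_row B) (dim_col A * dim_col B)
     (\<lambda>(i,j). A $$ (i div dim_row B, j div dim_col B) * B $$ (i mod dim_row B, j mod dim_col B))"

definition ptrace2 :: "nat \<Rightarrow> nat \<Rightarrow> complex mat \<Rightarrow> complex mat" where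
  "ptrace2 dA dB A = mat dA dA (\<lambda>(i,j). \<Sum>k<dB. A $$ (i*dB + k, j*dB + k))"

definition psd :: "nat \<Rightarrow> complex mat \<Rightarrow> bool" where
  "psd n A \<longleftrightarrow> A \<in> carrier_mat n n \<and>
     (\<forall>v \<in> carrier_vec n. (\<Sum>i<n. \<Sum>j<n. cnj (v $ i) * A $$ (i,j) * v $ j) \<in> \<real> \<and>
                           0 \<le> Re (\<Sum>i<n. \<Sum>j<n. cnj (v $ i) * A $$ (i,j) * v $ j))"

definition density :: "nat \<Rightarrow> complex mat \<Rightarrow> bool" where
  "density n \<rho> \<longleftrightarrow> psd n \<rho> \<and> tr \<rho> = 1"

text \<open>Two-outcome measurement: the POVM element E of the outcome "accept"/"1", 0 <= E <= I.\<close>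
definition povm_elem :: "nat \<Rightarrow> complex mat \<Rightarrow> bool" where
  "povm_elem n E \<longleftrightarrow> psd n E \<and> psd n (1\<^sub>m n - E)"

definition prob :: "complex mat \<Rightarrow> complex mat \<Rightarrow> real" where
  "prob E \<rho> = Re (tr (E * \<rho>))"

definition unit_state :: "nat \<Rightarrow> complex vec \<Rightarrow> bool" where
  "unit_state n v \<longleftrightarrow> v \<in> carrier_vec n \<and> (\<Sum>i<n. cmod (v $ i) ^ 2) = 1"

definition proj :: "complex vec \<Rightarrow> complex mat" where
  "proj v = mat (dim_vec v) (dim_vec v) (\<lambda>(i,j). v $ i * cnj (v $ j))"

text \<open>Quantum channels (CPTP maps) from C^din to C^dout given by Kraus operators.
  Every quantum operation (in particular every quantum algorithm, with its workspace
  discarded) is of this form.\<close>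
definition kraus :: "nat \<Rightarrow> nat \<Rightarrow> complex mat list \<Rightarrow> bool" where
  "kraus din dout Ks \<longleftrightarrow> (\<forall>K \<in> set Ks. K \<in> carrier_mat dout din) \<and>
     foldr (\<lambda>K acc. adj K * K + acc) Ks (0\<^sub>m din din) = 1\<^sub>m din"

definition apply_ch :: "nat \<Rightarrow> complex mat list \<Rightarrow> complex mat \<Rightarrow> complex mat" where
  "apply_ch dout Ks \<rho> = foldr (\<lambda>K acc. K * \<rho> * adj K + acc) Ks (0\<^sub>m dout dout)"

definition on_second :: "nat \<Rightarrow> complex mat list \<Rightarrow> complex mat list" where
  "on_second d Ks = map (kron (1\<^sub>m d)) Ks"

definition negl :: "(nat \<Rightarrow> real) \<Rightarrow> bool" where
  "negl f \<longleftrightarrow> (\<forall>c::nat. eventually (\<lambda>n. \<bar>f n\<bar> \<le> 1 / real n ^ c) sequentially)"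

definition polybounded :: "(nat \<Rightarrow> nat) \<Rightarrow> bool" where
  "polybounded f \<longleftrightarrow> (\<exists>k. \<forall>n. f n \<le> k * (n + 1) ^ k)"

text \<open>A scheme for security parameter n (lambda) is given by
  \<^item> qubit counts nA (auxiliary state), nC (commitment register C), nR (reveal register R),
    all polynomially bounded;
  \<^item> aux n: the auxiliary state |psi_n> (unit vector on nA n qubits), not necessarily
    efficiently generatable; one copy each goes to C and R;
  \<^item> Com b n: the honest commit operation of C on input b: a channel from its copy of
    |psi_n> to registers C (x) R;
  \<^item> Acc b n: the receiver's accepting POVM element when the revealed bit is b, acting on
    C (x) R (x) (receiver's copy of |psi_n>); the receiver outputs b on acceptance, bot otherwise.\<close>

definition honest_state ::
  "(nat \<Rightarrow> nat) \<Rightarrow> (nat \<Rightarrow> nat) \<Rightarrow> (nat \<Rightarrow> complex vec) \<Rightarrow> (bool \<Rightarrow> nat \<Rightarrow> complex mat list)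
    \<Rightarrow> bool \<Rightarrow> nat \<Rightarrow> complex mat" where
  "honest_state nC nR aux Com b n = apply_ch (2 ^ nC n * 2 ^ nR n) (Com b n) (proj (aux n))"

definition qaux_commitment ::
  "(nat \<Rightarrow> nat) \<Rightarrow> (nat \<Rightarrow> nat) \<Rightarrow> (nat \<Rightarrow> nat) \<Rightarrow> (nat \<Rightarrow> complex vec)
    \<Rightarrow> (bool \<Rightarrow> nat \<Rightarrow> complex mat list) \<Rightarrow> (bool \<Rightarrow> nat \<Rightarrow> complex mat) \<Rightarrow> bool" where
  "qaux_commitment nA nC nR aux Com Acc \<longleftrightarrow>
     polybounded nA \<and> polybounded nC \<and> polybounded nR \<and>
     (\<forall>n. unit_state (2 ^ nA n) (aux n)) \<and>
     (\<forall>b n. kraus (2 ^ nA n) (2 ^ nC n * 2 ^ nR n) (Com b n)) \<and>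
     (\<forall>b n. povm_elem (2 ^ nC n * 2 ^ nR n * 2 ^ nA n) (Acc b n)) \<and>
     \<comment> \<open>correctness: honest runs accept with probability 1\<close>
     (\<forall>b n. prob (Acc b n) (kron (honest_state nC nR aux Com b n) (proj (aux n))) = 1)"

text \<open>Statistical hiding: every non-uniform unbounded distinguisher with polynomial-size
  quantum advice rho_n (on nadv n qubits) acting on rho_n (x) Tr_R sigma^(b), and outputting 1
  with POVM element D n, has negligible advantage.\<close>
definition stat_hiding ::
  "(nat \<Rightarrow> nat) \<Rightarrow> (nat \<Rightarrow> nat) \<Rightarrow> (nat \<Rightarrow> nat) \<Rightarrow> (nat \<Rightarrow> complex vec)
    \<Rightarrow> (bool \<Rightarrow> nat \<Rightarrow> complex mat list) \<Rightarrow> bool" where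
  "stat_hiding nA nC nR aux Com \<longleftrightarrow>
     (\<forall>(nadv :: nat \<Rightarrow> nat) (\<rho> :: nat \<Rightarrow> complex mat) (D :: nat \<Rightarrow> complex mat).
        polybounded nadv \<longrightarrow>
        (\<forall>n. density (2 ^ nadv n) (\<rho> n)) \<longrightarrow>
        (\<forall>n. povm_elem (2 ^ nadv n * 2 ^ nC n) (D n)) \<longrightarrow>
        negl (\<lambda>n. prob (D n) (kron (\<rho> n) (ptrace2 (2 ^ nC n) (2 ^ nR n) (honest_state nC nR aux Com False n)))
                - prob (D n) (kron (\<rho> n) (ptrace2 (2 ^ nC n) (2 ^ nR n) (honest_state nC nR aux Com True n)))))"

text \<open>Statistical sum-binding: for malicious committers C_0^*, C_1^* that act identically in the
  commit phase (a channel MCom n from |psi_n> to C (x) S, with S a private register of arbitrary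
  finite dimension dS n) and whose reveal phases are channels MRev b n from S to R, the
  receiver's acceptance probabilities p_b satisfy p_0 + p_1 <= 1 + negl.\<close>
definition mal_state ::
  "(nat \<Rightarrow> nat) \<Rightarrow> (nat \<Rightarrow> nat) \<Rightarrow> (nat \<Rightarrow> complex vec) \<Rightarrow> (nat \<Rightarrow> nat)
    \<Rightarrow> (nat \<Rightarrow> complex mat list) \<Rightarrow> (bool \<Rightarrow> nat \<Rightarrow> complex mat list) \<Rightarrow> bool \<Rightarrow> nat \<Rightarrow> complex mat" where
  "mal_state nC nR aux dS MCom MRev b n =
     apply_ch (2 ^ nC n * 2 ^ nR n) (on_second (2 ^ nC n) (MRev b n))
       (apply_ch (2 ^ nC n * dS n) (MCom n) (proj (aux n)))"

definition stat_sum_binding ::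
  "(nat \<Rightarrow> nat) \<Rightarrow> (nat \<Rightarrow> nat) \<Rightarrow> (nat \<Rightarrow> nat) \<Rightarrow> (nat \<Rightarrow> complex vec)
    \<Rightarrow> (bool \<Rightarrow> nat \<Rightarrow> complex mat) \<Rightarrow> bool" where
  "stat_sum_binding nA nC nR aux Acc \<longleftrightarrow>
     (\<forall>(dS :: nat \<Rightarrow> nat) (MCom :: nat \<Rightarrow> complex mat list) (MRev :: bool \<Rightarrow> nat \<Rightarrow> complex mat list).
        (\<forall>n. 0 < dS n) \<longrightarrow>
        (\<forall>n. kraus (2 ^ nA n) (2 ^ nC n * dS n) (MCom n)) \<longrightarrow>
        (\<forall>b n. kraus (dS n) (2 ^ nR n) (MRev b n)) \<longrightarrow>
        (\<exists>\<epsilon>. negl \<epsilon> \<and>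
          (\<forall>n. prob (Acc False n) (kron (mal_state nC nR aux dS MCom MRev False n) (proj (aux n)))
              + prob (Acc True n) (kron (mal_state nC nR aux dS MCom MRev True n) (proj (aux n)))
              \<le> 1 + \<epsilon> n)))"

end

theory Submission
  imports Defs "Jordan_Normal_Form.Char_Poly"
begin

lemma adj_dims[simp]: "dim_row (adj A) = dim_col A" "dim_col (adj A) = dim_row A"
  by (simp_all add: adj_def)
lemma adj_index[simp]: "i < dim_col A \<Longrightarrow> j < dim_row A \<Longrightarrow> adj A $$ (i,j) = cnj (A $$ (j,i))"
  unfolding adj_def by (rule index_mat(1)[THEN trans], simp_all)
lemma adj_carrier[simp,intro]: "A \<in> carrier_mat n m \<Longrightarrow> adj A \<in> carrier_mat m n"
  by (metis adj_dims carrier_matD carrier_matI)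

lemma massoc: "dim_col A = dim_row B \<Longrightarrow> dim_col B = dim_row C \<Longrightarrow> (A * B) * C = A * (B * C)"
  by (rule assoc_mult_mat[of A "dim_row A" "dim_col A" B "dim_col B" C "dim_col C"]) auto

lemma adj_adj[simp]: "adj (adj A) = A"
  by (rule eq_matI) auto

lemma adj_mult: assumes "A \<in> carrier_mat n m" "B \<in> carrier_mat m k"
  shows "adj (A * B) = adj B * adj A"
proof (rule eq_matI)
  fix i j assume i: "i < dim_row (adj B * adj A)" and j: "j < dim_col (adj B * adj A)"
  have i': "i < k" and j': "j < n" using i j assms by auto
  have "adj (A * B) $$ (i,j) = cnj ((A * B) $$ (j,i))" using i' j' assms by simp
  also have "\<dots> = cnj (\<Sum>l<m. A $$ (j,l) * B $$ (l,i))"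
    using i' j' assms by (simp add: scalar_prod_def atLeast0LessThan)
  also have "\<dots> = (\<Sum>l<m. adj B $$ (i,l) * adj A $$ (l,j))"
    using i' j' assms by (simp add: mult.commute)
  also have "\<dots> = (adj B * adj A) $$ (i,j)"
    using i' j' assms by (simp add: scalar_prod_def atLeast0LessThan)
  finally show "adj (A * B) $$ (i,j) = (adj B * adj A) $$ (i,j)" .
qed (use assms in auto)

lemma adj_mult': "dim_col A = dim_row B \<Longrightarrow> adj (A * B) = adj B * adj A"
  by (rule adj_mult[of A "dim_row A" "dim_col A" B "dim_col B"]) auto

lemma mdistl: "dim_col A = dim_row B \<Longrightarrow> dim_row B = dim_row C \<Longrightarrow> dim_col B = dim_col C \<Longrightarrow>
   A * (B + C) = A * B + A * C"
  by (rule mult_add_distrib_mat[of A "dim_row A" "dim_col A" B "dim_col B"]) auto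

lemma mdistr: "dim_row A = dim_row B \<Longrightarrow> dim_col A = dim_col B \<Longrightarrow> dim_col A = dim_row C \<Longrightarrow>
   (A + B) * C = A * C + B * C"
  by (rule add_mult_distrib_mat[of A "dim_row A" "dim_col A" B C "dim_col C"]) auto

lemma mdistl_minus: "dim_col A = dim_row B \<Longrightarrow> dim_row B = dim_row C \<Longrightarrow> dim_col B = dim_col C \<Longrightarrow>
   A * (B - C) = A * B - (A * C :: complex mat)"
  by (rule mult_minus_distrib_mat[of A "dim_row A" "dim_col A" B "dim_col B"]) auto

lemma mdistr_minus: "dim_row A = dim_row B \<Longrightarrow> dim_col A = dim_col B \<Longrightarrow> dim_col A = dim_row C \<Longrightarrow>
   (A - B) * C = A * C - (B * C :: complex mat)"
  by (rule minus_mult_distrib_mat[of A "dim_row A" "dim_col A" B C "dim_col C"]) auto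

lemma adj_one[simp]: "adj (1\<^sub>m n) = 1\<^sub>m n"
  by (rule eq_matI) auto

lemma adj_zero[simp]: "adj (0\<^sub>m n m) = 0\<^sub>m m n"
  by (rule eq_matI) auto

lemma adj_add: assumes "A \<in> carrier_mat n m" "B \<in> carrier_mat n m"
  shows "adj (A + B) = adj A + adj B"
  by (rule eq_matI) (use assms in auto)

lemma adj_minus: assumes "A \<in> carrier_mat n m" "B \<in> carrier_mat n m"
  shows "adj (A - B) = adj A - adj B"
  by (rule eq_matI) (use assms in auto)

lemma adj_smult: "adj (c \<cdot>\<^sub>m A) = cnj c \<cdot>\<^sub>m adj A"
  by (rule eq_matI) auto

lemma tr_mult_comm: assumes "A \<in> carrier_mat n m" "B \<in> carrier_mat m n"
  shows "tr (A * B) = tr (B * A)"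
proof -
  have "tr (A * B) = (\<Sum>i<n. \<Sum>j<m. A $$ (i,j) * B $$ (j,i))"
    unfolding tr_def using assms by (simp add: scalar_prod_def atLeast0LessThan)
  also have "\<dots> = (\<Sum>j<m. \<Sum>i<n. B $$ (j,i) * A $$ (i,j))"
    by (subst sum.swap) (simp add: mult.commute)
  also have "\<dots> = tr (B * A)"
    unfolding tr_def using assms by (simp add: scalar_prod_def atLeast0LessThan)
  finally show ?thesis .
qed

lemma tr_add: assumes "A \<in> carrier_mat n n" "B \<in> carrier_mat n n"
  shows "tr (A + B) = tr A + tr B"
  unfolding tr_def using assms by (simp add: sum.distrib)

lemma tr_minus: assumes "A \<in> carrier_mat n n" "B \<in> carrier_mat n n"
  shows "tr (A - B) = tr A - tr B"
  unfolding tr_def using assms by (simp add: sum_subtractf)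

lemma tr_add': "dim_row B = dim_row A \<Longrightarrow> dim_col A = dim_row A \<Longrightarrow> dim_col B = dim_row A \<Longrightarrow> tr (A + B) = tr A + tr B"
  by (rule tr_add[of A "dim_row A"]) auto

lemma tr_minus': "dim_row B = dim_row A \<Longrightarrow> dim_col A = dim_row A \<Longrightarrow> dim_col B = dim_row A \<Longrightarrow> tr (A - B) = tr A - tr B"
  by (rule tr_minus[of A "dim_row A"]) auto

lemma tr_smult: "A \<in> carrier_mat n n \<Longrightarrow> tr (c \<cdot>\<^sub>m A) = c * tr A"
  unfolding tr_def by (simp add: sum_distrib_left)

lemma tr_adj: "A \<in> carrier_mat n n \<Longrightarrow> tr (adj A) = cnj (tr A)"
  unfolding tr_def by simp

lemma tr_one[simp]: "tr (1\<^sub>m n) = of_nat n"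
  by (simp add: tr_def)

definition dmat :: "nat \<Rightarrow> (nat \<Rightarrow> real) \<Rightarrow> complex mat" where
  "dmat n d = mat n n (\<lambda>(i,j). if i = j then complex_of_real (d i) else 0)"

lemma dmat_carrier[simp]: "dmat n d \<in> carrier_mat n n" by (simp add: dmat_def)
lemma dmat_dims[simp]: "dim_row (dmat n d) = n" "dim_col (dmat n d) = n" by (simp_all add: dmat_def)
lemma dmat_index[simp]: "i < n \<Longrightarrow> j < n \<Longrightarrow> dmat n d $$ (i,j) = (if i = j then complex_of_real (d i) else 0)"
  by (simp add: dmat_def)

lemma adj_dmat[simp]: "adj (dmat n d) = dmat n d"
  by (rule eq_matI) auto

lemma exists_eigen:
  fixes A :: "complex mat"
  assumes A: "A \<in> carrier_mat (Suc n) (Suc n)"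
  shows "\<exists>e v. v \<in> carrier_vec (Suc n) \<and> v \<noteq> 0\<^sub>v (Suc n) \<and> A *\<^sub>v v = e \<cdot>\<^sub>v v"
proof -
  obtain as where cp: "char_poly A = (\<Prod> a \<leftarrow> as. [:- a, 1:])" and len: "length as = Suc n"
    using char_poly_factorized[OF A] by blast
  then obtain e rest where as: "as = e # rest" by (cases as) auto
  have "poly (char_poly A) e = 0" unfolding cp as by simp
  hence "eigenvalue A e" using eigenvalue_root_char_poly[OF A] by simp
  thus ?thesis unfolding eigenvalue_def eigenvector_def using A by auto
qed

lemma householder:
  fixes u :: "complex vec"
  assumes u: "u \<in> carrier_vec (Suc n)" and unit: "(\<Sum>i<Suc n. cmod (u $ i) ^ 2) = 1"
    and u0: "u $ 0 = complex_of_real r" and r: "0 \<le> r"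
  shows "\<exists>H. H \<in> carrier_mat (Suc n) (Suc n) \<and> adj H = H \<and> H * H = 1\<^sub>m (Suc n) \<and>
    (\<forall>i < Suc n. H $$ (i,0) = u $ i)"
proof -
  define N where "N = Suc n"
  define w where "w = (\<lambda>i. (if i = 0 then 1 else 0) - u $ i)"
  define S where "S = (\<Sum>i<N. cmod (w i) ^ 2)"
  define c :: real where "c = (if S = 0 then 0 else 2 / S)"
  define H where "H = mat N N (\<lambda>(i,j). (if i = j then 1 else 0) - complex_of_real c * w i * cnj (w j))"
  have cS: "c * c * S = 2 * c" unfolding c_def by auto
  have Sw: "(\<Sum>k<N. cnj (w k) * w k) = complex_of_real S"
    unfolding S_def by (simp add: complex_mult_cnj cmod_def mult.commute)
  have HC: "H \<in> carrier_mat N N" unfolding H_def by simp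
  have adjH: "adj H = H" unfolding H_def by (rule eq_matI) (auto simp: mult.commute)
  have HH: "H * H = 1\<^sub>m N"
  proof (rule eq_matI)
    fix i j assume i: "i < dim_row (1\<^sub>m N)" and j: "j < dim_col (1\<^sub>m N)"
    hence i: "i < N" and j: "j < N" by auto
    have "(H * H) $$ (i,j) = (\<Sum>k<N. ((if i = k then 1 else 0) - complex_of_real c * w i * cnj (w k)) *
          ((if k = j then 1 else 0) - complex_of_real c * w k * cnj (w j)))"
      using i j unfolding H_def by (simp add: scalar_prod_def atLeast0LessThan)
    also have "\<dots> = (\<Sum>k<N. (if i = k then 1 else 0) * (if k = j then 1 else 0))
        - (\<Sum>k<N. (if i = k then 1 else 0) * (complex_of_real c * w k * cnj (w j)))
        - (\<Sum>k<N. (complex_of_real c * w i * cnj (w k)) * (if k = j then 1 else 0))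
        + (complex_of_real c * complex_of_real c * w i * cnj (w j)) * (\<Sum>k<N. cnj (w k) * w k)"
      by (simp add: algebra_simps sum_subtractf sum.distrib sum_distrib_left)
    also have "\<dots> = (if i = j then 1 else 0) - complex_of_real c * w i * cnj (w j)
        - complex_of_real c * w i * cnj (w j)
        + complex_of_real (c * c * S) * w i * cnj (w j)"
    proof -
      have d1: "(\<Sum>k<N. (if i = k then 1 else 0) * (if k = j then 1 else 0)) = (if i = j then 1 else (0::complex))"
        using i by (simp add: if_distrib[where f="\<lambda>a. a * _"] cong: if_cong)
      have d2: "(\<Sum>k<N. (if i = k then 1 else 0) * X k) = X i" for X :: "nat \<Rightarrow> complex"
      proof -
        have "(\<Sum>k<N. (if i = k then 1 else 0) * X k) = (\<Sum>k<N. if i = k then X k else 0)"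
          by (rule sum.cong) auto
        thus ?thesis using i by simp
      qed
      have d3: "(\<Sum>k<N. Y k * (if k = j then 1 else 0)) = Y j" for Y :: "nat \<Rightarrow> complex"
      proof -
        have "(\<Sum>k<N. Y k * (if k = j then 1 else 0)) = (\<Sum>k<N. if j = k then Y k else 0)"
          by (rule sum.cong) auto
        thus ?thesis using j by simp
      qed
      show ?thesis unfolding d1 d2 d3 Sw by (simp add: algebra_simps)
    qed
    also have "\<dots> = (if i = j then 1 else 0)" unfolding cS by (simp add: algebra_simps)
    finally show "(H * H) $$ (i,j) = 1\<^sub>m N $$ (i,j)" using i j by simp
  qed (auto simp: H_def)
  have col0: "H $$ (i,0) = u $ i" if i: "i < N" for i
  proof -
    have w0: "w 0 = complex_of_real (1 - r)" unfolding w_def u0 by simp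
    have unit': "cmod (u $ 0) ^ 2 + (\<Sum>i<n. cmod (u $ Suc i) ^ 2) = 1"
      using unit by (simp only: sum.lessThan_Suc_shift)
    hence rest: "(\<Sum>i<n. cmod (u $ Suc i) ^ 2) = 1 - r^2" unfolding u0 by simp
    have "S = cmod (w 0) ^ 2 + (\<Sum>i<n. cmod (w (Suc i)) ^ 2)"
      unfolding S_def N_def by (simp only: sum.lessThan_Suc_shift)
    also have "\<dots> = (1 - r)^2 + (1 - r^2)"
    proof -
      have "cmod (w 0) ^ 2 = (1 - r)^2" unfolding w0 norm_of_real by simp
      moreover have "(\<Sum>i<n. cmod (w (Suc i)) ^ 2) = (\<Sum>i<n. cmod (u $ Suc i) ^ 2)"
        by (simp add: w_def)
      ultimately show ?thesis using rest by simp
    qed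
    finally have S: "S = 2 - 2 * r" by (simp add: power2_eq_square algebra_simps)
    show ?thesis
    proof (cases "S = 0")
      case True
      hence r1: "r = 1" using S by simp
      hence "(\<Sum>i<n. cmod (u $ Suc i) ^ 2) = 0" using rest by simp
      hence z: "\<forall>k<n. cmod (u $ Suc k) ^ 2 = 0"
        by (subst (asm) sum_nonneg_eq_0_iff) auto
      have "u $ i = (if i = 0 then 1 else 0)"
      proof (cases i)
        case 0 thus ?thesis using u0 r1 by simp
      next
        case (Suc k) thus ?thesis using z i N_def by auto
      qed
      thus ?thesis using i True unfolding H_def c_def by simp
    next
      case False
      hence r1: "r \<noteq> 1" using S by simp
      have "H $$ (i,0) = (if i = 0 then 1 else 0) - complex_of_real (2 / (2 - 2 * r)) * w i * complex_of_real (1 - r)"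
        using i False unfolding H_def c_def S N_def by (simp add: w0)
      also have "complex_of_real (2 / (2 - 2 * r)) * w i * complex_of_real (1 - r) = w i"
      proof -
        have "(2 / (2 - 2 * r)) * (1 - r) = 1" using r1 by (simp add: field_simps)
        hence "complex_of_real (2 / (2 - 2 * r)) * complex_of_real (1 - r) = 1"
          by (metis of_real_1 of_real_mult)
        thus ?thesis by (metis mult.commute mult.left_commute mult.right_neutral)
      qed
      finally show ?thesis unfolding w_def by simp
    qed
  qed
  show ?thesis using HC adjH HH col0 unfolding N_def by blast
qed

definition blk :: "nat \<Rightarrow> complex \<Rightarrow> complex mat \<Rightarrow> complex mat" where
  "blk n x M = mat (Suc n) (Suc n) (\<lambda>(i,j). if i = 0 \<and> j = 0 then x else if i = 0 \<or> j = 0 then 0 else M $$ (i-1, j-1))"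

lemma blk_carrier[simp]: "blk n x M \<in> carrier_mat (Suc n) (Suc n)" by (simp add: blk_def)
lemma blk_dims[simp]: "dim_row (blk n x M) = Suc n" "dim_col (blk n x M) = Suc n" by (simp_all add: blk_def)

lemma blk_index:
  "blk n x M $$ (0,0) = x"
  "j < n \<Longrightarrow> blk n x M $$ (0,Suc j) = 0"
  "i < n \<Longrightarrow> blk n x M $$ (Suc i,0) = 0"
  "i < n \<Longrightarrow> j < n \<Longrightarrow> blk n x M $$ (Suc i,Suc j) = M $$ (i,j)"
  by (simp_all add: blk_def)

lemma blk_eqI:
  assumes "A \<in> carrier_mat (Suc n) (Suc n)"
    "A $$ (0,0) = x" "\<And>j. j < n \<Longrightarrow> A $$ (0,Suc j) = 0" "\<And>i. i < n \<Longrightarrow> A $$ (Suc i,0) = 0"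
    "\<And>i j. i < n \<Longrightarrow> j < n \<Longrightarrow> A $$ (Suc i,Suc j) = M $$ (i,j)"
  shows "A = blk n x M"
proof (rule eq_matI)
  fix i j assume i: "i < dim_row (blk n x M)" and j: "j < dim_col (blk n x M)"
  show "A $$ (i,j) = blk n x M $$ (i,j)"
  proof (cases i)
    case 0 thus ?thesis using j assms by (cases j) (auto simp: blk_index)
  next
    case (Suc i') thus ?thesis using i j assms by (cases j) (auto simp: blk_index)
  qed
qed (use assms in auto)

lemma blk_mult:
  assumes M: "M \<in> carrier_mat n n" and N: "N \<in> carrier_mat n n"
  shows "blk n x M * blk n y N = blk n (x * y) (M * N)"
proof (rule blk_eqI)
  have e: "(blk n x M * blk n y N) $$ (i,j) =
     blk n x M $$ (i,0) * blk n y N $$ (0,j) + (\<Sum>k<n. blk n x M $$ (i,Suc k) * blk n y N $$ (Suc k,j))"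
    if "i < Suc n" "j < Suc n" for i j
  proof -
    have "(blk n x M * blk n y N) $$ (i,j) = (\<Sum>k<Suc n. blk n x M $$ (i,k) * blk n y N $$ (k,j))"
      using that by (simp add: scalar_prod_def atLeast0LessThan)
    also have "\<dots> = blk n x M $$ (i,0) * blk n y N $$ (0,j) + (\<Sum>k<n. blk n x M $$ (i,Suc k) * blk n y N $$ (Suc k,j))"
      by (simp only: sum.lessThan_Suc_shift)
    finally show ?thesis .
  qed
  show "(blk n x M * blk n y N) $$ (0,0) = x * y" using e[of 0 0] by (simp add: blk_index)
  show "(blk n x M * blk n y N) $$ (0,Suc j) = 0" if "j < n" for j using e[of 0 "Suc j"] that by (simp add: blk_index)
  show "(blk n x M * blk n y N) $$ (Suc i,0) = 0" if "i < n" for i using e[of "Suc i" 0] that by (simp add: blk_index)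
  show "(blk n x M * blk n y N) $$ (Suc i,Suc j) = (M * N) $$ (i,j)" if "i < n" "j < n" for i j
    using e[of "Suc i" "Suc j"] that M N by (simp add: blk_index scalar_prod_def atLeast0LessThan)
qed (auto intro!: mult_carrier_mat)

lemma adj_blk: assumes "M \<in> carrier_mat n n" shows "adj (blk n x M) = blk n (cnj x) (adj M)"
  by (rule blk_eqI) (use assms in \<open>auto simp: blk_index\<close>)

lemma blk_one: "blk n 1 (1\<^sub>m n) = 1\<^sub>m (Suc n)"
  by (rule sym, rule blk_eqI) auto

lemma dmat_blk: "dmat (Suc n) d = blk n (complex_of_real (d 0)) (dmat n (\<lambda>i. d (Suc i)))"
  by (rule blk_eqI) auto

lemma phase_lemma: fixes z :: complex assumes "z \<noteq> 0"
  shows "cnj z / complex_of_real (cmod z) * z = complex_of_real (cmod z)"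
proof -
  have "cnj z * z = complex_of_real (cmod z) * complex_of_real (cmod z)"
    by (metis complex_norm_square mult.commute of_real_mult power2_eq_square)
  moreover have "complex_of_real (cmod z) \<noteq> 0" using assms by simp
  ultimately show ?thesis by (simp add: field_simps)
qed

theorem spectral:
  fixes A :: "complex mat"
  assumes "A \<in> carrier_mat n n" and "adj A = A"
  shows "\<exists>U d. U \<in> carrier_mat n n \<and> adj U * U = 1\<^sub>m n \<and> U * adj U = 1\<^sub>m n \<and> A = U * dmat n d * adj U"
  using assms
proof (induction n arbitrary: A)
  case 0
  show ?case by (rule exI[of _ "1\<^sub>m 0"], rule exI[of _ "\<lambda>_. 0"]) (use 0 in \<open>auto intro!: eq_matI\<close>)
next
  case (Suc n)
  define N where "N = Suc n"
  have A: "A \<in> carrier_mat N N" and hA: "adj A = A" using Suc.prems N_def by auto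
  obtain e v where v: "v \<in> carrier_vec N" "v \<noteq> 0\<^sub>v N" and ev: "A *\<^sub>v v = e \<cdot>\<^sub>v v"
    using exists_eigen[OF Suc.prems(1)] N_def by blast
  define s where "s = (\<Sum>i<N. cmod (v $ i) ^ 2)"
  have s0: "s > 0"
  proof -
    obtain i where i: "i < N" "v $ i \<noteq> 0" using v by (metis eq_vecI carrier_vecD index_zero_vec dim_vec)
    have "cmod (v $ i) ^ 2 > 0" using i by simp
    moreover have "cmod (v $ i) ^ 2 \<le> s" unfolding s_def using i
      by (intro member_le_sum) auto
    ultimately show ?thesis by linarith
  qed
  define \<theta> where "\<theta> = (if v $ 0 = 0 then 1 else cnj (v $ 0) / complex_of_real (cmod (v $ 0)))"
  have th1: "cmod \<theta> = 1" unfolding \<theta>_def by (simp add: norm_divide)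
  have th0: "\<theta> * v $ 0 = complex_of_real (cmod (v $ 0))"
    unfolding \<theta>_def using phase_lemma[of "v $ 0"] by auto
  define u where "u = (\<theta> / complex_of_real (sqrt s)) \<cdot>\<^sub>v v"
  have u: "u \<in> carrier_vec N" using v unfolding u_def by simp
  have u0: "u $ 0 = complex_of_real (cmod (v $ 0) / sqrt s)"
    using v th0 unfolding u_def N_def by (simp add: mult.commute)
  have uunit: "(\<Sum>i<N. cmod (u $ i) ^ 2) = 1"
  proof -
    have "(\<Sum>i<N. cmod (u $ i) ^ 2) = (\<Sum>i<N. cmod (v $ i) ^ 2 / s)"
      using v s0 unfolding u_def by (intro sum.cong) (auto simp: norm_mult norm_divide th1 power_divide)
    also have "\<dots> = s / s" by (simp add: s_def sum_divide_distrib[symmetric])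
    also have "\<dots> = 1" using s0 by simp
    finally show ?thesis .
  qed
  have evu: "A *\<^sub>v u = e \<cdot>\<^sub>v u"
    unfolding u_def using A v ev by (simp add: mult_mat_vec smult_smult_assoc mult.commute)
  obtain H where H: "H \<in> carrier_mat N N" and hH: "adj H = H" and HH: "H * H = 1\<^sub>m N"
     and Hc: "\<forall>i < N. H $$ (i,0) = u $ i"
  proof -
    have r: "0 \<le> cmod (v $ 0) / sqrt s" using s0 by simp
    show ?thesis using householder[OF u[unfolded N_def] uunit[unfolded N_def] u0 r] that unfolding N_def by blast
  qed
  have colH: "col H 0 = u" using H Hc u unfolding N_def by (intro eq_vecI) auto
  define B where "B = H * A * H"
  have B: "B \<in> carrier_mat N N" unfolding B_def using H A by simp
  have hB: "adj B = B" unfolding B_def using H A hA hH by (simp add: adj_mult[of _ N N _ N])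
  have colB: "col B 0 = e \<cdot>\<^sub>v unit_vec N 0"
  proof -
    have "col B 0 = (H * A) *\<^sub>v col H 0" unfolding B_def using H A N_def by (intro col_mult2[of _ N N]) auto
    also have "\<dots> = H *\<^sub>v (A *\<^sub>v u)" using H A u colH by simp
    also have "\<dots> = e \<cdot>\<^sub>v (H *\<^sub>v col H 0)" using evu H u colH by (simp add: mult_mat_vec)
    also have "H *\<^sub>v col H 0 = col (H * H) 0" using H N_def by (intro col_mult2[symmetric, of _ N N]) auto
    also have "\<dots> = unit_vec N 0" using HH N_def by simp
    finally show ?thesis .
  qed
  have Bi0: "B $$ (i,0) = (if i = 0 then e else 0)" if "i < N" for i
  proof -
    have "B $$ (i,0) = col B 0 $ i" using that B N_def by simp
    thus ?thesis unfolding colB using that by simp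
  qed
  have B0j: "B $$ (0,j) = (if j = 0 then cnj e else 0)" if "j < N" for j
  proof -
    have "B $$ (0,j) = adj B $$ (0,j)" using hB by simp
    also have "\<dots> = cnj (B $$ (j,0))" using that B N_def by simp
    finally show ?thesis using Bi0[OF that] by simp
  qed
  have ereal: "e = complex_of_real (Re e)"
  proof -
    have b1: "B $$ (0,0) = e" using Bi0[of 0] N_def by simp
    have b2: "B $$ (0,0) = cnj e" using B0j[of 0] N_def by simp
    have ec: "cnj e = e" using b1 b2 by argo
    have "Im (cnj e) = Im e" using ec by (rule arg_cong)
    hence "Im e = 0" by simp
    thus ?thesis by (simp add: complex_eq_iff)
  qed
  define A' where "A' = mat n n (\<lambda>(i,j). B $$ (Suc i, Suc j))"
  have A': "A' \<in> carrier_mat n n" unfolding A'_def by simp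
  have hA': "adj A' = A'"
  proof (rule eq_matI)
    fix i j assume "i < dim_row A'" "j < dim_col A'"
    hence ij: "i < n" "j < n" unfolding A'_def by auto
    have "adj A' $$ (i,j) = cnj (B $$ (Suc j, Suc i))" using ij unfolding A'_def by simp
    also have "\<dots> = adj B $$ (Suc i, Suc j)" using ij B N_def by simp
    also have "\<dots> = A' $$ (i,j)" using ij hB unfolding A'_def by simp
    finally show "adj A' $$ (i,j) = A' $$ (i,j)" .
  qed (auto simp: A'_def)
  obtain U' d' where U': "U' \<in> carrier_mat n n" and U'1: "adj U' * U' = 1\<^sub>m n" and U'2: "U' * adj U' = 1\<^sub>m n"
     and A'd: "A' = U' * dmat n d' * adj U'"
    using Suc.IH[OF A' hA'] by blast
  have Bblk: "B = blk n e A'"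
    by (rule blk_eqI) (use B N_def Bi0 B0j in \<open>auto simp: A'_def\<close>)
  define U1 where "U1 = blk n 1 U'"
  define d where "d = (\<lambda>i. if i = 0 then Re e else d' (i - 1))"
  have U1: "U1 \<in> carrier_mat N N" unfolding U1_def N_def by simp
  have D: "dmat N d = blk n e (dmat n d')"
    unfolding N_def dmat_blk d_def using ereal[symmetric] by simp
  have adjU1: "adj U1 = blk n 1 (adj U')" unfolding U1_def using U' by (simp add: adj_blk)
  have U1a: "adj U1 * U1 = 1\<^sub>m N" unfolding adjU1 using U' U'1 by (simp add: U1_def N_def blk_mult blk_one)
  have U1b: "U1 * adj U1 = 1\<^sub>m N" unfolding adjU1 using U' U'2 by (simp add: U1_def N_def blk_mult blk_one)
  have BU: "B = U1 * dmat N d * adj U1"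
    unfolding D adjU1 Bblk using U' by (simp add: U1_def A'd blk_mult)
  have AHBH: "A = H * B * H"
  proof -
    have "H * B * H = (H * H) * A * (H * H)" unfolding B_def using carrier_matD[OF H] carrier_matD[OF A] by (simp add: massoc)
    thus ?thesis using HH A N_def by simp
  qed
  define U where "U = H * U1"
  have UC: "U \<in> carrier_mat N N" unfolding U_def using H U1 by simp
  have adjU: "adj U = adj U1 * H" unfolding U_def using H U1 hH by (simp add: adj_mult)
  have "adj U * U = adj U1 * (H * H) * U1" unfolding adjU using carrier_matD[OF H] carrier_matD[OF U1] by (simp add: U_def massoc)
  hence Ua: "adj U * U = 1\<^sub>m N" using HH U1a U1 by simp
  have "U * adj U = H * (U1 * adj U1) * H" unfolding adjU using carrier_matD[OF H] carrier_matD[OF U1] by (simp add: U_def massoc)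
  hence Ub: "U * adj U = 1\<^sub>m N" using HH U1b H by simp
  have "A = U * dmat N d * adj U" unfolding adjU using carrier_matD[OF H] carrier_matD[OF U1] by (simp add: AHBH BU U_def massoc)
  thus ?case using UC Ua Ub unfolding N_def by blast
qed

definition unitary :: "nat \<Rightarrow> complex mat \<Rightarrow> bool" where
  "unitary n U \<longleftrightarrow> U \<in> carrier_mat n n \<and> adj U * U = 1\<^sub>m n \<and> U * adj U = 1\<^sub>m n"

definition um :: "complex mat \<Rightarrow> nat \<Rightarrow> (nat \<Rightarrow> real) \<Rightarrow> complex mat" where
  "um U n g = U * dmat n g * adj U"

lemma dmat_mult: "dmat n f * dmat n g = dmat n (\<lambda>i. f i * g i)"
proof (rule eq_matI)
  fix i j assume "i < dim_row (dmat n (\<lambda>i. f i * g i))" "j < dim_col (dmat n (\<lambda>i. f i * g i))"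
  hence ij: "i < n" "j < n" by auto
  have "(dmat n f * dmat n g) $$ (i,j) = (\<Sum>k<n. dmat n f $$ (i,k) * dmat n g $$ (k,j))"
    using ij by (simp add: scalar_prod_def atLeast0LessThan)
  also have "\<dots> = (\<Sum>k<n. if k = i then (if i = j then complex_of_real (f i * g i) else 0) else 0)"
    using ij by (intro sum.cong) auto
  also have "\<dots> = dmat n (\<lambda>i. f i * g i) $$ (i,j)" using ij by simp
  finally show "(dmat n f * dmat n g) $$ (i,j) = dmat n (\<lambda>i. f i * g i) $$ (i,j)" .
qed auto

lemma dmat_add: "dmat n f + dmat n g = dmat n (\<lambda>i. f i + g i)"
  by (rule eq_matI) auto

lemma dmat_minus: "dmat n f - dmat n g = dmat n (\<lambda>i. f i - g i)"
  by (rule eq_matI) auto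

lemma dmat_one: "dmat n (\<lambda>_. 1) = 1\<^sub>m n"
  by (rule eq_matI) auto

lemma dmat_zero: "dmat n (\<lambda>_. 0) = 0\<^sub>m n n"
  by (rule eq_matI) auto

lemma dmat_cong: "(\<And>i. i < n \<Longrightarrow> f i = g i) \<Longrightarrow> dmat n f = dmat n g"
  by (rule eq_matI) auto

lemma um_carrier[simp]: "unitary n U \<Longrightarrow> um U n g \<in> carrier_mat n n"
  unfolding um_def unitary_def by auto

lemma um_dims[simp]: "unitary n U \<Longrightarrow> dim_row (um U n g) = n" "unitary n U \<Longrightarrow> dim_col (um U n g) = n"
  using um_carrier by (auto simp del: um_carrier)

lemma um_mult: assumes U: "unitary n U"
  shows "um U n f * um U n g = um U n (\<lambda>i. f i * g i)"
proof -
  have C: "U \<in> carrier_mat n n" "adj U * U = 1\<^sub>m n" using U unfolding unitary_def by auto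
  have "um U n f * um U n g = U * dmat n f * (adj U * U) * dmat n g * adj U"
    unfolding um_def using carrier_matD[OF C(1)] by (simp add: massoc)
  also have "\<dots> = U * (dmat n f * dmat n g) * adj U"
    unfolding C(2) using carrier_matD[OF C(1)] by (simp add: massoc)
  finally show ?thesis unfolding dmat_mult um_def .
qed

lemma um_add: assumes U: "unitary n U"
  shows "um U n f + um U n g = um U n (\<lambda>i. f i + g i)"
proof -
  have C: "U \<in> carrier_mat n n" using U unfolding unitary_def by auto
  show ?thesis unfolding um_def dmat_add[symmetric] using C
    by (simp add: mdistl mdistr)
qed

lemma um_minus: assumes U: "unitary n U"
  shows "um U n f - um U n g = um U n (\<lambda>i. f i - g i)"
proof -
  have C: "U \<in> carrier_mat n n" using U unfolding unitary_def by auto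
  show ?thesis unfolding um_def dmat_minus[symmetric] using C
    by (simp add: mdistl_minus mdistr_minus)
qed

lemma um_one: assumes U: "unitary n U" shows "um U n (\<lambda>_. 1) = 1\<^sub>m n"
  using U unfolding um_def unitary_def dmat_one by auto

lemma um_zero: assumes U: "unitary n U" shows "um U n (\<lambda>_. 0) = 0\<^sub>m n n"
  using U unfolding um_def unitary_def dmat_zero by auto

lemma um_cong: "(\<And>i. i < n \<Longrightarrow> f i = g i) \<Longrightarrow> um U n f = um U n g"
  unfolding um_def using dmat_cong by metis

lemma adj_um: assumes U: "unitary n U" shows "adj (um U n g) = um U n g"
proof -
  have C: "U \<in> carrier_mat n n" using U unfolding unitary_def by auto
  show ?thesis unfolding um_def using C carrier_matD[OF C]
    by (simp add: adj_mult' massoc)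
qed

lemma tr_um: assumes U: "unitary n U" shows "tr (um U n g) = (\<Sum>i<n. complex_of_real (g i))"
proof -
  have C: "U \<in> carrier_mat n n" "adj U * U = 1\<^sub>m n" using U unfolding unitary_def by auto
  have "tr (um U n g) = tr ((U * dmat n g) * adj U)" unfolding um_def ..
  also have "\<dots> = tr (adj U * (U * dmat n g))" using C by (intro tr_mult_comm[of _ n n]) auto
  also have "\<dots> = tr (dmat n g)" using C carrier_matD[OF C(1)] by (simp flip: massoc)
  finally show ?thesis by (simp add: tr_def)
qed

lemma cnj_mult_self: "cnj z * z = complex_of_real (cmod z ^ 2)"
  by (simp only: complex_norm_square mult.commute)

definition qf :: "complex mat \<Rightarrow> nat \<Rightarrow> (nat \<Rightarrow> complex) \<Rightarrow> complex" where
  "qf A n v = (\<Sum>i<n. \<Sum>j<n. cnj (v i) * A $$ (i,j) * v j)"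

lemma psd_qf: "psd n A \<longleftrightarrow> A \<in> carrier_mat n n \<and> (\<forall>v. qf A n v \<in> \<real> \<and> 0 \<le> Re (qf A n v))"
proof -
  have e: "qf A n v = qf A n (\<lambda>i. vec n v $ i)" for v
    unfolding qf_def by (intro sum.cong refl) auto
  have e2: "(\<Sum>i<n. \<Sum>j<n. cnj (w $ i) * A $$ (i,j) * w $ j) = qf A n (\<lambda>i. w $ i)" for w
    unfolding qf_def ..
  show ?thesis
  proof
    assume p: "psd n A"
    have "qf A n v \<in> \<real> \<and> 0 \<le> Re (qf A n v)" for v
    proof -
      have "vec n v \<in> carrier_vec n" by simp
      hence "qf A n (\<lambda>i. vec n v $ i) \<in> \<real> \<and> 0 \<le> Re (qf A n (\<lambda>i. vec n v $ i))"
        using p unfolding psd_def e2 by blast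
      thus ?thesis using e[of v] by simp
    qed
    thus "A \<in> carrier_mat n n \<and> (\<forall>v. qf A n v \<in> \<real> \<and> 0 \<le> Re (qf A n v))" using p unfolding psd_def by blast
  next
    assume "A \<in> carrier_mat n n \<and> (\<forall>v. qf A n v \<in> \<real> \<and> 0 \<le> Re (qf A n v))"
    thus "psd n A" unfolding psd_def e2 by blast
  qed
qed

lemma qf_gram: assumes F: "F \<in> carrier_mat m n"
  shows "qf (adj F * F) n v = complex_of_real (\<Sum>k<m. cmod (\<Sum>j<n. F $$ (k,j) * v j) ^ 2)"
proof -
  have "qf (adj F * F) n v = (\<Sum>i<n. \<Sum>j<n. cnj (v i) * (\<Sum>k<m. cnj (F $$ (k,i)) * F $$ (k,j)) * v j)"
    unfolding qf_def using F by (intro sum.cong refl) (simp add: scalar_prod_def atLeast0LessThan)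
  also have "\<dots> = (\<Sum>k<m. (\<Sum>i<n. cnj (F $$ (k,i) * v i)) * (\<Sum>j<n. F $$ (k,j) * v j))"
  proof -
    have "(\<Sum>i<n. \<Sum>j<n. cnj (v i) * (\<Sum>k<m. cnj (F $$ (k,i)) * F $$ (k,j)) * v j)
       = (\<Sum>i<n. \<Sum>j<n. \<Sum>k<m. cnj (F $$ (k,i) * v i) * (F $$ (k,j) * v j))"
      by (simp add: sum_distrib_left sum_distrib_right mult_ac)
    also have "\<dots> = (\<Sum>i<n. \<Sum>k<m. \<Sum>j<n. cnj (F $$ (k,i) * v i) * (F $$ (k,j) * v j))"
      by (rule sum.cong[OF refl], rule sum.swap)
    also have "\<dots> = (\<Sum>k<m. \<Sum>i<n. \<Sum>j<n. cnj (F $$ (k,i) * v i) * (F $$ (k,j) * v j))"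
      by (rule sum.swap)
    also have "\<dots> = (\<Sum>k<m. (\<Sum>i<n. cnj (F $$ (k,i) * v i)) * (\<Sum>j<n. F $$ (k,j) * v j))"
      by (simp add: sum_product)
    finally show ?thesis .
  qed
  also have "\<dots> = (\<Sum>k<m. complex_of_real (cmod (\<Sum>j<n. F $$ (k,j) * v j) ^ 2))"
    by (intro sum.cong refl) (simp only: cnj_sum[symmetric] cnj_mult_self)
  finally show ?thesis by (simp only: of_real_sum)
qed

lemma psd_gram: assumes F: "F \<in> carrier_mat m n" shows "psd n (adj F * F)"
  unfolding psd_qf using F by (auto simp: qf_gram intro!: sum_nonneg)

lemma tr_gram: assumes F: "F \<in> carrier_mat m n"
  shows "tr (adj F * F) = complex_of_real (\<Sum>i<n. \<Sum>k<m. cmod (F $$ (k,i)) ^ 2)"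
proof -
  have "tr (adj F * F) = (\<Sum>i<n. \<Sum>k<m. cnj (F $$ (k,i)) * F $$ (k,i))"
    unfolding tr_def using F by (intro sum.cong refl) (simp_all add: scalar_prod_def atLeast0LessThan)
  also have "\<dots> = (\<Sum>i<n. \<Sum>k<m. complex_of_real (cmod (F $$ (k,i)) ^ 2))"
    by (intro sum.cong refl) (simp only: cnj_mult_self)
  finally show ?thesis by (simp only: of_real_sum)
qed

lemma tr_gram_nonneg: assumes F: "F \<in> carrier_mat m n" shows "0 \<le> Re (tr (adj F * F))"
  unfolding tr_gram[OF F] by (simp add: sum_nonneg)

lemma tr_gram_zero: assumes F: "F \<in> carrier_mat m n" and z: "tr (adj F * F) = 0"
  shows "F = 0\<^sub>m m n"
proof (rule eq_matI)
  fix k i assume "k < dim_row (0\<^sub>m m n :: complex mat)" "i < dim_col (0\<^sub>m m n :: complex mat)"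
  hence ki: "k < m" "i < n" by auto
  have s: "(\<Sum>i<n. \<Sum>k<m. cmod (F $$ (k,i)) ^ 2) = 0" using z unfolding tr_gram[OF F] by (simp only: of_real_eq_0_iff)
  have "(\<Sum>k<m. cmod (F $$ (k,i)) ^ 2) = 0"
    using s ki by (subst (asm) sum_nonneg_eq_0_iff) (auto intro: sum_nonneg)
  hence "cmod (F $$ (k,i)) ^ 2 = 0"
    using ki by (subst (asm) sum_nonneg_eq_0_iff) auto
  thus "F $$ (k,i) = 0\<^sub>m m n $$ (k,i)" using ki by simp
qed (use F in auto)

lemma um_gram: assumes U: "unitary n U" and g: "\<And>i. i < n \<Longrightarrow> 0 \<le> g i"
  shows "um U n g = adj (dmat n (\<lambda>i. sqrt (g i)) * adj U) * (dmat n (\<lambda>i. sqrt (g i)) * adj U)"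
proof -
  have C: "U \<in> carrier_mat n n" using U unfolding unitary_def by auto
  have "adj (dmat n (\<lambda>i. sqrt (g i)) * adj U) * (dmat n (\<lambda>i. sqrt (g i)) * adj U)
     = U * (dmat n (\<lambda>i. sqrt (g i)) * dmat n (\<lambda>i. sqrt (g i))) * adj U"
    using carrier_matD[OF C] by (simp add: adj_mult' massoc)
  also have "\<dots> = um U n g" unfolding dmat_mult um_def
    using g by (intro arg_cong2[where f="(*)"] arg_cong2[where f="(*)"] refl dmat_cong) auto
  finally show ?thesis by simp
qed

lemma psd_um: assumes U: "unitary n U" and g: "\<And>i. i < n \<Longrightarrow> 0 \<le> g i"
  shows "psd n (um U n g)"
proof -
  have C: "U \<in> carrier_mat n n" using U unfolding unitary_def by auto
  have e: "um U n g = adj (dmat n (\<lambda>i. sqrt (g i)) * adj U) * (dmat n (\<lambda>i. sqrt (g i)) * adj U)"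
    by (rule um_gram[OF U g])
  show ?thesis unfolding e using C by (intro psd_gram[of _ n]) auto
qed

lemma tr_gram_gram_nonneg: assumes F: "F \<in> carrier_mat k n" and G: "G \<in> carrier_mat l n"
  shows "0 \<le> Re (tr ((adj F * F) * (adj G * G)))"
proof -
  have "tr ((adj F * F) * (adj G * G)) = tr (adj F * ((F * adj G) * G))"
    using carrier_matD[OF F] carrier_matD[OF G] by (simp add: massoc)
  also have "\<dots> = tr (((F * adj G) * G) * adj F)" using F G by (intro tr_mult_comm[of _ n k]) auto
  also have "\<dots> = tr (adj (G * adj F) * (G * adj F))"
    using carrier_matD[OF F] carrier_matD[OF G] by (simp add: massoc adj_mult')
  finally show ?thesis using tr_gram_nonneg[of "G * adj F" l k] F G by auto
qed

lemma tr_um_um_nonneg: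
  assumes U: "unitary n U" and V: "unitary n V" and g: "\<And>i. i < n \<Longrightarrow> 0 \<le> g i" and h: "\<And>i. i < n \<Longrightarrow> 0 \<le> h i"
  shows "0 \<le> Re (tr (um U n g * um V n h))"
proof -
  have e1: "um U n g = adj (dmat n (\<lambda>i. sqrt (g i)) * adj U) * (dmat n (\<lambda>i. sqrt (g i)) * adj U)"
    by (rule um_gram[OF U g])
  have e2: "um V n h = adj (dmat n (\<lambda>i. sqrt (h i)) * adj V) * (dmat n (\<lambda>i. sqrt (h i)) * adj V)"
    by (rule um_gram[OF V h])
  show ?thesis unfolding e1 e2
    by (rule tr_gram_gram_nonneg) (use U V in \<open>auto simp: unitary_def\<close>)
qed

lemma unitary_spectral:
  assumes "A \<in> carrier_mat n n" "adj A = A"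
  shows "\<exists>U d. unitary n U \<and> A = um U n d"
  using spectral[OF assms] unfolding unitary_def um_def by blast

lemma powers_stormer:
  assumes U0: "unitary n U0" and U1: "unitary n U1"
    and g0: "\<And>i. i < n \<Longrightarrow> 0 \<le> g0 i" and g1: "\<And>i. i < n \<Longrightarrow> 0 \<le> g1 i"
    and P0: "P0 = um U0 n g0" and P1: "P1 = um U1 n g1"
    and tr: "tr (P0 * P0) = tr (P1 * P1)"
  shows "\<exists>Q. Q \<in> carrier_mat n n \<and> psd n Q \<and> psd n (1\<^sub>m n - Q) \<and>
     Re (tr ((P0 - P1) * (P0 - P1))) \<le> 2 * Re (tr (Q * (P0 * P0 - P1 * P1)))"
proof -
  have P0C: "P0 \<in> carrier_mat n n" and P1C: "P1 \<in> carrier_mat n n" using U0 U1 P0 P1 by auto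
  define X where "X = P0 - P1"
  have XC: "X \<in> carrier_mat n n" unfolding X_def using P0C P1C by auto
  have hX: "adj X = X" unfolding X_def using P0C P1C U0 U1 P0 P1 by (simp add: adj_minus[of _ n n] adj_um)
  obtain V x where V: "unitary n V" and Xd: "X = um V n x" using unitary_spectral[OF XC hX] by blast
  define ind where "ind = (\<lambda>i. if 0 \<le> x i then 1 else (0::real))"
  define Q where "Q = um V n ind"
  define Xp where "Xp = um V n (\<lambda>i. max (x i) 0)"
  define Xm where "Xm = um V n (\<lambda>i. max (- x i) 0)"
  have QC: "Q \<in> carrier_mat n n" and XpC: "Xp \<in> carrier_mat n n" and XmC: "Xm \<in> carrier_mat n n"
    using V unfolding Q_def Xp_def Xm_def by auto
  note dims = carrier_matD[OF P0C] carrier_matD[OF P1C] carrier_matD[OF XC] carrier_matD[OF QC]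
    carrier_matD[OF XpC] carrier_matD[OF XmC]
  have psdQ: "psd n Q" unfolding Q_def by (rule psd_um[OF V]) (simp add: ind_def)
  have IQ: "1\<^sub>m n - Q = um V n (\<lambda>i. 1 - ind i)" unfolding Q_def um_one[OF V, symmetric] um_minus[OF V] ..
  have psdIQ: "psd n (1\<^sub>m n - Q)" unfolding IQ by (rule psd_um[OF V]) (simp add: ind_def)
  have QX: "Q * X = Xp" unfolding Q_def Xd Xp_def um_mult[OF V] by (rule um_cong) (simp add: ind_def)
  have XQ: "X * Q = Xp" unfolding Q_def Xd Xp_def um_mult[OF V] by (rule um_cong) (simp add: ind_def)
  define a where "a = tr (Xp * P1)"
  define b where "b = tr (Xm * P1)"
  define p where "p = (\<Sum>i<n. complex_of_real (max (x i) 0 * max (x i) 0))"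
  define q where "q = (\<Sum>i<n. complex_of_real (max (- x i) 0 * max (- x i) 0))"
  have XXt: "tr (X * X) = p + q"
  proof -
    have "tr (X * X) = (\<Sum>i<n. complex_of_real (x i * x i))" unfolding Xd um_mult[OF V] tr_um[OF V] ..
    also have "\<dots> = p + q" unfolding p_def q_def sum.distrib[symmetric] of_real_add[symmetric]
      by (intro sum.cong refl arg_cong[where f=complex_of_real]) (simp add: max_def)
    finally show ?thesis .
  qed
  have XpXt: "tr (Xp * X) = p"
    unfolding Xd Xp_def um_mult[OF V] tr_um[OF V] p_def
    by (intro sum.cong refl arg_cong[where f=complex_of_real]) (simp add: max_def)
  have XmXt: "tr (Xm * X) = - q"
    unfolding Xd Xm_def um_mult[OF V] tr_um[OF V] q_def sum_negf[symmetric] of_real_minus[symmetric]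
    by (intro sum.cong refl arg_cong[where f=complex_of_real]) (simp add: max_def)
  have XPM: "X = Xp - Xm" unfolding Xd Xp_def Xm_def um_minus[OF V]
    by (rule um_cong) (simp add: max_def)
  have P0e: "P0 = P1 + X" unfolding X_def using P0C P1C by (intro eq_matI) auto
  have sq: "P0 * P0 = P1 * P1 + X * P1 + (P1 * X + X * X)"
    unfolding P0e using dims by (simp add: mdistl mdistr)
  have e1: "tr (Q * (P0 * P0)) - tr (Q * (P1 * P1)) = 2 * a + p"
  proof -
    have "tr (Q * (P0 * P0)) = tr (Q * (P1 * P1)) + tr (Q * (X * P1)) + (tr (Q * (P1 * X)) + tr (Q * (X * X)))"
      unfolding sq using dims by (simp add: mdistl tr_add')
    moreover have "tr (Q * (P1 * X)) = a"
    proof -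
      have "tr (Q * (P1 * X)) = tr ((Q * P1) * X)" using dims by (simp add: massoc)
      also have "\<dots> = tr (X * (Q * P1))" using QC P1C XC by (intro tr_mult_comm[of _ n n]) auto
      also have "\<dots> = tr ((X * Q) * P1)" using dims by (simp add: massoc)
      finally show ?thesis unfolding XQ a_def .
    qed
    moreover have "tr (Q * (X * P1)) = a"
      unfolding a_def QX[symmetric] using dims by (simp add: massoc)
    moreover have "tr (Q * (X * X)) = p"
      unfolding XpXt[symmetric] QX[symmetric] using dims by (simp add: massoc)
    ultimately show ?thesis by (simp add: algebra_simps)
  qed
  have XP1: "tr (X * P1) = a - b"
    unfolding XPM a_def b_def using dims XpC XmC P1C by (simp add: mdistr_minus tr_minus')
  have e2: "tr (P0 * P0) - tr (P1 * P1) = 2 * (a - b) + p + q"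
  proof -
    have "tr (P0 * P0) = tr (P1 * P1) + tr (X * P1) + (tr (P1 * X) + tr (X * X))"
      unfolding sq using dims by (simp add: tr_add')
    moreover have "tr (P1 * X) = tr (X * P1)" using P1C XC by (intro tr_mult_comm[of _ n n]) auto
    ultimately show ?thesis unfolding XP1 XXt by (simp add: algebra_simps)
  qed
  have e4: "tr (Xm * P0) = b - q"
    unfolding P0e b_def using dims by (simp add: mdistl tr_add' XmXt)
  have a0: "0 \<le> Re a" unfolding a_def Xp_def P1
    by (rule tr_um_um_nonneg[OF V U1]) (auto simp: g1)
  have b0: "0 \<le> Re (tr (Xm * P0))" unfolding Xm_def P0
    by (rule tr_um_um_nonneg[OF V U0]) (auto simp: g0)
  have trQ: "tr (Q * (P0 * P0 - P1 * P1)) = tr (Q * (P0 * P0)) - tr (Q * (P1 * P1))"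
    using dims by (simp add: mdistl_minus tr_minus')
  have key: "2 * tr (Q * (P0 * P0 - P1 * P1)) - tr (X * X) = 2 * a + 2 * tr (Xm * P0)"
  proof -
    have z: "2 * (a - b) + p + q = 0" using e2 tr by simp
    show ?thesis unfolding trQ e1 XXt e4 using z by (simp add: algebra_simps)
  qed
  have "Re (tr (X * X)) \<le> 2 * Re (tr (Q * (P0 * P0 - P1 * P1)))"
  proof -
    have "Re (2 * tr (Q * (P0 * P0 - P1 * P1)) - tr (X * X)) = 2 * Re a + 2 * Re (tr (Xm * P0))"
      unfolding key by simp
    thus ?thesis using a0 b0 by simp
  qed
  thus ?thesis using QC psdQ psdIQ unfolding X_def by blast
qed

lemma eig_nonneg:
  assumes U: "unitary n U" and N: "N \<in> carrier_mat m n" and e: "adj N * N = um U n g" and i: "i < n"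
  shows "0 \<le> g i"
proof -
  have C: "U \<in> carrier_mat n n" "adj U * U = 1\<^sub>m n" using U unfolding unitary_def by auto
  note d = carrier_matD[OF C(1)] carrier_matD[OF N]
  have "adj (N * U) * (N * U) = adj U * (adj N * N) * U" using d by (simp add: adj_mult' massoc)
  also have "\<dots> = (adj U * U) * dmat n g * (adj U * U)" unfolding e um_def using d by (simp add: massoc)
  also have "\<dots> = dmat n g" unfolding C(2) by simp
  finally have "(adj (N * U) * (N * U)) $$ (i,i) = complex_of_real (g i)" using i by simp
  moreover have "(adj (N * U) * (N * U)) $$ (i,i) = (\<Sum>k<m. cnj ((N * U) $$ (k,i)) * (N * U) $$ (k,i))"
    using i d by (simp add: scalar_prod_def atLeast0LessThan)
  ultimately have "complex_of_real (g i) = complex_of_real (\<Sum>k<m. cmod ((N * U) $$ (k,i)) ^ 2)"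
    by (simp only: cnj_mult_self of_real_sum)
  hence "g i = (\<Sum>k<m. cmod ((N * U) $$ (k,i)) ^ 2)" by (simp only: of_real_eq_iff)
  thus ?thesis by (simp add: sum_nonneg)
qed

lemma polar:
  assumes N: "N \<in> carrier_mat m n"
  shows "\<exists>U g Y. unitary n U \<and> (\<forall>i<n. 0 \<le> g i) \<and> Y \<in> carrier_mat m n \<and>
     adj N * N = um U n g \<and> N = Y * um U n (\<lambda>i. sqrt (g i)) \<and>
     adj Y * Y = um U n (\<lambda>i. if 0 < g i then 1 else 0) \<and>
     Y * um U n (\<lambda>i. if 0 < g i then 1 else 0) = Y"
proof -
  have rC: "adj N * N \<in> carrier_mat n n" using N by auto
  have hr: "adj (adj N * N) = adj N * N" using N by (simp add: adj_mult')
  obtain U g where U: "unitary n U" and rd: "adj N * N = um U n g" using unitary_spectral[OF rC hr] by blast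
  have g0: "\<forall>i<n. 0 \<le> g i" using eig_nonneg[OF U N rd] by blast
  define ind where "ind = (\<lambda>i. if 0 < g i then 1 else (0::real))"
  define Pi where "Pi = um U n ind"
  define P where "P = um U n (\<lambda>i. sqrt (g i))"
  define Pinv where "Pinv = um U n (\<lambda>i. if 0 < g i then 1 / sqrt (g i) else 0)"
  define Y where "Y = N * Pinv"
  have UC: "U \<in> carrier_mat n n" using U unfolding unitary_def by auto
  have PiC: "Pi \<in> carrier_mat n n" and PC: "P \<in> carrier_mat n n" and PinvC: "Pinv \<in> carrier_mat n n"
    using U unfolding Pi_def P_def Pinv_def by auto
  have YC: "Y \<in> carrier_mat m n" unfolding Y_def using N PinvC by auto
  note d = carrier_matD[OF N] carrier_matD[OF PiC] carrier_matD[OF PC] carrier_matD[OF PinvC] carrier_matD[OF YC]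
  have PinvP: "Pinv * P = Pi" unfolding Pinv_def P_def Pi_def um_mult[OF U]
    by (rule um_cong) (auto simp: ind_def)
  have PinvPi: "Pinv * Pi = Pinv" unfolding Pinv_def Pi_def um_mult[OF U]
    by (rule um_cong) (auto simp: ind_def)
  have PinvrPinv: "Pinv * (adj N * N) * Pinv = Pi" unfolding rd Pinv_def Pi_def um_mult[OF U]
    using g0 by (intro um_cong) (auto simp: ind_def)
  have IPi: "1\<^sub>m n - Pi = um U n (\<lambda>i. 1 - ind i)" unfolding Pi_def um_one[OF U, symmetric] um_minus[OF U] ..
  have adjIPi: "adj (1\<^sub>m n - Pi) = 1\<^sub>m n - Pi" unfolding IPi by (rule adj_um[OF U])
  have IrI: "(1\<^sub>m n - Pi) * (adj N * N) * (1\<^sub>m n - Pi) = 0\<^sub>m n n"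
    unfolding IPi rd um_mult[OF U] um_zero[OF U, symmetric]
    using g0 by (intro um_cong) (auto simp: ind_def)
  have NPi: "N * Pi = N"
  proof -
    define K where "K = N * (1\<^sub>m n - Pi)"
    have KC: "K \<in> carrier_mat m n" unfolding K_def using N PiC by auto
    have "adj K * K = adj (1\<^sub>m n - Pi) * (adj N * N) * (1\<^sub>m n - Pi)"
      unfolding K_def using d by (simp add: adj_mult' massoc)
    also have "\<dots> = 0\<^sub>m n n" unfolding adjIPi IrI ..
    finally have "tr (adj K * K) = 0" by (simp add: tr_def)
    hence K0: "K = 0\<^sub>m m n" using tr_gram_zero[OF KC] by blast
    have "K = N - N * Pi" unfolding K_def using d by (simp add: mdistl_minus)
    hence "N - N * Pi = 0\<^sub>m m n" using K0 by simp
    note Z = this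
    show ?thesis
    proof (rule eq_matI)
      fix i j assume ij: "i < dim_row N" "j < dim_col N"
      have "(N - N * Pi) $$ (i,j) = 0" using Z ij d by simp
      thus "(N * Pi) $$ (i,j) = N $$ (i,j)" using ij d by simp
    qed (use d in auto)
  qed
  have NYP: "N = Y * P" unfolding Y_def using d by (simp add: massoc PinvP NPi)
  have aPinv: "adj Pinv = Pinv" unfolding Pinv_def by (rule adj_um[OF U])
  have YY: "adj Y * Y = Pi"
  proof -
    have "adj Y * Y = adj Pinv * (adj N * N) * Pinv" unfolding Y_def using d by (simp add: adj_mult' massoc)
    thus ?thesis unfolding aPinv PinvrPinv .
  qed
  have YPi: "Y * Pi = Y" unfolding Y_def using d by (simp add: massoc PinvPi)
  show ?thesis
    apply (rule exI[of _ U], rule exI[of _ g], rule exI[of _ Y])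
    using U g0 YC rd NYP YY YPi unfolding P_def Pi_def ind_def by blast
qed

lemma idem_compl: assumes E: "E \<in> carrier_mat n n" and EE: "E * E = E"
  shows "(1\<^sub>m n - E) * (1\<^sub>m n - E) = 1\<^sub>m n - (E :: complex mat)"
proof -
  note d = carrier_matD[OF E]
  have "(1\<^sub>m n - E) * (1\<^sub>m n - E) = (1\<^sub>m n - E) - (E - E * E)"
    using d by (simp add: mdistr_minus mdistl_minus)
  also have "\<dots> = 1\<^sub>m n - E" unfolding EE using d by (intro eq_matI) auto
  finally show ?thesis .
qed

lemma core:
  assumes N0: "N0 \<in> carrier_mat dS dC" and N1: "N1 \<in> carrier_mat dS dC"
    and t0: "tr (adj N0 * N0) = 1" and t1: "tr (adj N1 * N1) = 1"
  shows "\<exists>V Q F1 F2. V \<in> carrier_mat dS dS \<and> F1 \<in> carrier_mat dS dS \<and> F2 \<in> carrier_mat dC dS \<and>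
     Q \<in> carrier_mat dC dC \<and> psd dC Q \<and> psd dC (1\<^sub>m dC - Q) \<and>
     adj V * V + adj F1 * F1 + adj F2 * F2 = 1\<^sub>m dS \<and>
     0 \<le> Re (tr (Q * (adj N0 * N0 - adj N1 * N1))) \<and>
     1 - Re (tr (Q * (adj N0 * N0 - adj N1 * N1))) \<le> Re (tr (adj N1 * V * N0))"
proof -
  obtain U0 g0 Y0 where U0: "unitary dC U0" and g0: "\<forall>i<dC. 0 \<le> g0 i" and Y0: "Y0 \<in> carrier_mat dS dC"
    and r0: "adj N0 * N0 = um U0 dC g0" and NY0: "N0 = Y0 * um U0 dC (\<lambda>i. sqrt (g0 i))"
    and YY0: "adj Y0 * Y0 = um U0 dC (\<lambda>i. if 0 < g0 i then 1 else 0)"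
    and YPi0: "Y0 * um U0 dC (\<lambda>i. if 0 < g0 i then 1 else 0) = Y0"
    using polar[OF N0] by blast
  obtain U1 g1 Y1 where U1: "unitary dC U1" and g1: "\<forall>i<dC. 0 \<le> g1 i" and Y1: "Y1 \<in> carrier_mat dS dC"
    and r1: "adj N1 * N1 = um U1 dC g1" and NY1: "N1 = Y1 * um U1 dC (\<lambda>i. sqrt (g1 i))"
    and YY1: "adj Y1 * Y1 = um U1 dC (\<lambda>i. if 0 < g1 i then 1 else 0)"
    and YPi1: "Y1 * um U1 dC (\<lambda>i. if 0 < g1 i then 1 else 0) = Y1"
    using polar[OF N1] by blast
  define P0 where "P0 = um U0 dC (\<lambda>i. sqrt (g0 i))"
  define P1 where "P1 = um U1 dC (\<lambda>i. sqrt (g1 i))"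
  define Pi0 where "Pi0 = um U0 dC (\<lambda>i. if 0 < g0 i then 1 else 0)"
  define Pi1 where "Pi1 = um U1 dC (\<lambda>i. if 0 < g1 i then 1 else 0)"
  have P0C: "P0 \<in> carrier_mat dC dC" and P1C: "P1 \<in> carrier_mat dC dC"
    and Pi0C: "Pi0 \<in> carrier_mat dC dC" and Pi1C: "Pi1 \<in> carrier_mat dC dC"
    unfolding P0_def P1_def Pi0_def Pi1_def using U0 U1 by auto
  note d = carrier_matD[OF N0] carrier_matD[OF N1] carrier_matD[OF Y0] carrier_matD[OF Y1]
    carrier_matD[OF P0C] carrier_matD[OF P1C] carrier_matD[OF Pi0C] carrier_matD[OF Pi1C]
  have PP0: "P0 * P0 = adj N0 * N0" unfolding P0_def r0 um_mult[OF U0]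
    using g0 by (intro um_cong) auto
  have PP1: "P1 * P1 = adj N1 * N1" unfolding P1_def r1 um_mult[OF U1]
    using g1 by (intro um_cong) auto
  have aP0: "adj P0 = P0" unfolding P0_def by (rule adj_um[OF U0])
  have aP1: "adj P1 = P1" unfolding P1_def by (rule adj_um[OF U1])
  have Pi0P0: "Pi0 * P0 = P0" unfolding P0_def Pi0_def um_mult[OF U0] using g0
    by (intro um_cong) (auto simp: not_less order.antisym)
  have P1Pi1: "P1 * Pi1 = P1" unfolding P1_def Pi1_def um_mult[OF U1] using g1
    by (intro um_cong) (auto simp: not_less order.antisym)
  have Pi1Pi1: "Pi1 * Pi1 = Pi1" unfolding Pi1_def um_mult[OF U1] by (intro um_cong) auto
  have aPi1: "adj Pi1 = Pi1" unfolding Pi1_def by (rule adj_um[OF U1])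
  obtain Q where QC: "Q \<in> carrier_mat dC dC" and psdQ: "psd dC Q" and psdIQ: "psd dC (1\<^sub>m dC - Q)"
    and PS: "Re (tr ((P0 - P1) * (P0 - P1))) \<le> 2 * Re (tr (Q * (P0 * P0 - P1 * P1)))"
    using powers_stormer[OF U0 U1 _ _ P0_def P1_def] g0 g1 PP0 PP1 t0 t1 by auto
  have XX0: "0 \<le> Re (tr ((P0 - P1) * (P0 - P1)))"
  proof -
    have "adj (P0 - P1) = P0 - P1" using P0C P1C by (simp add: adj_minus[of _ dC dC] aP0 aP1)
    hence "(P0 - P1) * (P0 - P1) = adj (P0 - P1) * (P0 - P1)" by simp
    moreover have "P0 - P1 \<in> carrier_mat dC dC" using P0C P1C by auto
    ultimately show ?thesis using tr_gram_nonneg[of "P0 - P1" dC dC] by metis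
  qed
  have trXX: "tr ((P0 - P1) * (P0 - P1)) = 2 - 2 * tr (P1 * P0)"
  proof -
    have "tr ((P0 - P1) * (P0 - P1)) = (tr (P0 * P0) - tr (P0 * P1)) - (tr (P1 * P0) - tr (P1 * P1))"
      using d by (simp add: mdistr_minus mdistl_minus tr_minus')
    moreover have "tr (P0 * P1) = tr (P1 * P0)" using P0C P1C by (intro tr_mult_comm[of _ dC dC]) auto
    ultimately show ?thesis unfolding PP0 PP1 t0 t1 by simp
  qed
  define V where "V = Y1 * adj Y0"
  have VC: "V \<in> carrier_mat dS dS" unfolding V_def using Y0 Y1 by auto
  have ov: "adj N1 * V * N0 = P1 * P0"
  proof -
    have "adj N1 * V * N0 = P1 * (adj Y1 * Y1) * (adj Y0 * Y0) * P0"
      unfolding V_def NY0 NY1 P0_def[symmetric] P1_def[symmetric] using d by (simp add: adj_mult' massoc aP1)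
    also have "\<dots> = (P1 * Pi1) * (Pi0 * P0)"
      unfolding YY0 YY1 Pi0_def[symmetric] Pi1_def[symmetric] using d by (simp add: massoc)
    finally show ?thesis unfolding Pi0P0 P1Pi1 .
  qed
  define E0 where "E0 = Y0 * adj Y0"
  define F1 where "F1 = 1\<^sub>m dS - E0"
  define F2 where "F2 = (1\<^sub>m dC - Pi1) * adj Y0"
  have E0C: "E0 \<in> carrier_mat dS dS" unfolding E0_def using Y0 by auto
  have F1C: "F1 \<in> carrier_mat dS dS" unfolding F1_def using E0C by auto
  have F2C: "F2 \<in> carrier_mat dC dS" unfolding F2_def using Y0 Pi1C by auto
  have EE: "E0 * E0 = E0"
  proof -
    have "E0 * E0 = (Y0 * Pi0) * adj Y0" unfolding E0_def Pi0_def YY0[symmetric] using d by (simp add: massoc)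
    thus ?thesis unfolding Pi0_def YPi0 E0_def .
  qed
  have aE0: "adj E0 = E0" unfolding E0_def using d by (simp add: adj_mult')
  have FF1: "adj F1 * F1 = 1\<^sub>m dS - E0"
  proof -
    have "adj F1 = F1" unfolding F1_def using E0C by (simp add: adj_minus[of _ dS dS] aE0)
    thus ?thesis unfolding F1_def using idem_compl[OF E0C EE] by simp
  qed
  have VV: "adj V * V = Y0 * Pi1 * adj Y0"
  proof -
    have "adj V * V = Y0 * (adj Y1 * Y1) * adj Y0" unfolding V_def using d by (simp add: adj_mult' massoc)
    thus ?thesis unfolding YY1 Pi1_def[symmetric] .
  qed
  have FF2: "adj F2 * F2 = E0 - Y0 * Pi1 * adj Y0"
  proof -
    have a: "adj (1\<^sub>m dC - Pi1) = 1\<^sub>m dC - Pi1" using Pi1C by (simp add: adj_minus[of _ dC dC] aPi1)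
    have "adj F2 * F2 = Y0 * ((1\<^sub>m dC - Pi1) * (1\<^sub>m dC - Pi1)) * adj Y0"
      unfolding F2_def using d by (simp add: adj_mult' massoc a)
    also have "\<dots> = Y0 * (1\<^sub>m dC - Pi1) * adj Y0" unfolding idem_compl[OF Pi1C Pi1Pi1] ..
    also have "\<dots> = E0 - Y0 * Pi1 * adj Y0" unfolding E0_def using d by (simp add: mdistl_minus mdistr_minus)
    finally show ?thesis .
  qed
  have sum1: "adj V * V + adj F1 * F1 + adj F2 * F2 = 1\<^sub>m dS"
    unfolding VV FF1 FF2 using d E0C by (intro eq_matI) auto
  have "0 \<le> Re (tr (Q * (adj N0 * N0 - adj N1 * N1)))" using PS XX0 unfolding PP0 PP1 by simp
  moreover have "1 - Re (tr (Q * (adj N0 * N0 - adj N1 * N1))) \<le> Re (tr (adj N1 * V * N0))"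
    using PS trXX unfolding ov PP0 PP1 by simp
  ultimately show ?thesis using VC F1C F2C QC psdQ psdIQ sum1 by blast
qed

lemma sum_split: fixes a b :: nat shows "(\<Sum>i<a*b. f i) = (\<Sum>x<a. \<Sum>y<b. f (x*b + y))"
proof (induction a)
  case 0 thus ?case by simp
next
  case (Suc a)
  have "(\<Sum>i<Suc a * b. f i) = (\<Sum>i<a*b. f i) + (\<Sum>i\<in>{a*b..<a*b+b}. f i)"
    by (simp add: sum.atLeastLessThan_concat[symmetric] lessThan_atLeast0 add.commute)
  also have "(\<Sum>i\<in>{a*b..<a*b+b}. f i) = (\<Sum>y<b. f (a*b + y))"
    by (simp add: sum.shift_bounds_nat_ivl[of f 0 "a*b" b, simplified] lessThan_atLeast0 add.commute)
  finally show ?case using Suc by simp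
qed

definition mv :: "complex mat \<Rightarrow> (nat \<Rightarrow> complex) \<Rightarrow> nat \<Rightarrow> complex" where
  "mv K x i = (\<Sum>a<dim_col K. K $$ (i,a) * x a)"

lemma sum_list_nth: "sum_list (map f xs) = (\<Sum>l<length xs. f (xs ! l))"
  by (simp add: sum_list_sum_nth lessThan_atLeast0)

lemma sum_append_nth: "(\<Sum>l<length (xs @ ys). f ((xs @ ys) ! l)) = (\<Sum>l<length xs. f (xs ! l)) + (\<Sum>l<length ys. f (ys ! l))"
  by (simp only: sum_list_nth[symmetric] map_append sum_list_append)

lemma sum_map_upt: "(\<Sum>l<length (map g [0..<m]). f (map g [0..<m] ! l)) = (\<Sum>l<m. f (g l))"
  by simp

lemma kraus_foldr:
  assumes "\<forall>K\<in>set Ks. K \<in> carrier_mat dout din"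
  shows "foldr (\<lambda>K acc. adj K * K + acc) Ks (0\<^sub>m din din) =
    mat din din (\<lambda>(a,b). \<Sum>l<length Ks. (adj (Ks!l) * Ks!l) $$ (a,b))"
  using assms
proof (induction Ks)
  case Nil thus ?case by (intro eq_matI) auto
next
  case (Cons K Ks)
  have K: "K \<in> carrier_mat dout din" using Cons by auto
  show ?case
  proof (rule eq_matI)
    fix a b assume ab: "a < dim_row (mat din din (\<lambda>(a,b). \<Sum>l<length (K # Ks). (adj ((K # Ks)!l) * (K # Ks)!l) $$ (a,b)))"
        "b < dim_col (mat din din (\<lambda>(a,b). \<Sum>l<length (K # Ks). (adj ((K # Ks)!l) * (K # Ks)!l) $$ (a,b)))"
    hence ab: "a < din" "b < din" by auto
    have "foldr (\<lambda>K acc. adj K * K + acc) (K # Ks) (0\<^sub>m din din) $$ (a,b)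
      = (adj K * K) $$ (a,b) + (\<Sum>l<length Ks. (adj (Ks!l) * Ks!l) $$ (a,b))"
      using Cons K ab by simp
    also have "\<dots> = (\<Sum>l<length (K # Ks). (adj ((K # Ks)!l) * (K # Ks)!l) $$ (a,b))"
      by (simp only: length_Cons sum.lessThan_Suc_shift nth_Cons_0 nth_Cons_Suc)
    finally show "foldr (\<lambda>K acc. adj K * K + acc) (K # Ks) (0\<^sub>m din din) $$ (a,b) =
      mat din din (\<lambda>(a,b). \<Sum>l<length (K # Ks). (adj ((K # Ks)!l) * (K # Ks)!l) $$ (a,b)) $$ (a,b)"
      using ab by simp
  qed (use Cons K in auto)
qed

lemma conj_pure: assumes K: "K \<in> carrier_mat dout din"
  shows "K * mat din din (\<lambda>(i,j). x i * cnj (x j)) * adj K = mat dout dout (\<lambda>(i,j). mv K x i * cnj (mv K x j))"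
proof (rule eq_matI)
  fix i j assume "i < dim_row (mat dout dout (\<lambda>(i,j). mv K x i * cnj (mv K x j)))"
    "j < dim_col (mat dout dout (\<lambda>(i,j). mv K x i * cnj (mv K x j)))"
  hence ij: "i < dout" "j < dout" by auto
  have "(K * mat din din (\<lambda>(i,j). x i * cnj (x j)) * adj K) $$ (i,j) =
     (\<Sum>b<din. (\<Sum>a<din. K $$ (i,a) * (x a * cnj (x b))) * cnj (K $$ (j,b)))"
    using K ij by (simp add: scalar_prod_def atLeast0LessThan)
  also have "\<dots> = (\<Sum>b<din. \<Sum>a<din. (K $$ (i,a) * x a) * cnj (K $$ (j,b) * x b))"
    by (simp add: sum_distrib_left sum_distrib_right mult_ac)
  also have "\<dots> = (\<Sum>a<din. \<Sum>b<din. (K $$ (i,a) * x a) * cnj (K $$ (j,b) * x b))"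
    by (rule sum.swap)
  also have "\<dots> = mv K x i * cnj (mv K x j)"
    unfolding mv_def using K by (simp add: sum_product cnj_sum)
  finally show "(K * mat din din (\<lambda>(i,j). x i * cnj (x j)) * adj K) $$ (i,j) =
       mat dout dout (\<lambda>(i,j). mv K x i * cnj (mv K x j)) $$ (i,j)" using ij by simp
qed (use K in auto)

lemma apply_ch_pure:
  assumes "\<forall>K\<in>set Ks. K \<in> carrier_mat dout din"
  shows "apply_ch dout Ks (mat din din (\<lambda>(i,j). x i * cnj (x j))) =
    mat dout dout (\<lambda>(i,j). \<Sum>l<length Ks. mv (Ks!l) x i * cnj (mv (Ks!l) x j))"
  using assms
proof (induction Ks)
  case Nil thus ?case by (intro eq_matI) (auto simp: apply_ch_def)
next
  case (Cons K Ks)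
  have K: "K \<in> carrier_mat dout din" using Cons by auto
  have IH: "apply_ch dout Ks (mat din din (\<lambda>(i,j). x i * cnj (x j))) =
    mat dout dout (\<lambda>(i,j). \<Sum>l<length Ks. mv (Ks!l) x i * cnj (mv (Ks!l) x j))" using Cons by auto
  have e: "apply_ch dout (K # Ks) \<rho> = K * \<rho> * adj K + apply_ch dout Ks \<rho>" for \<rho>
    by (simp add: apply_ch_def)
  show ?case
  proof (rule eq_matI)
    fix i j assume "i < dim_row (mat dout dout (\<lambda>(i,j). \<Sum>l<length (K # Ks). mv ((K # Ks)!l) x i * cnj (mv ((K # Ks)!l) x j)))"
      "j < dim_col (mat dout dout (\<lambda>(i,j). \<Sum>l<length (K # Ks). mv ((K # Ks)!l) x i * cnj (mv ((K # Ks)!l) x j)))"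
    hence ij: "i < dout" "j < dout" by auto
    have "apply_ch dout (K # Ks) (mat din din (\<lambda>(i,j). x i * cnj (x j))) $$ (i,j) =
      mv K x i * cnj (mv K x j) + (\<Sum>l<length Ks. mv (Ks!l) x i * cnj (mv (Ks!l) x j))"
      unfolding e IH conj_pure[OF K] using ij by simp
    also have "\<dots> = (\<Sum>l<length (K # Ks). mv ((K # Ks)!l) x i * cnj (mv ((K # Ks)!l) x j))"
      by (simp only: length_Cons sum.lessThan_Suc_shift nth_Cons_0 nth_Cons_Suc)
    finally show "apply_ch dout (K # Ks) (mat din din (\<lambda>(i,j). x i * cnj (x j))) $$ (i,j) =
      mat dout dout (\<lambda>(i,j). \<Sum>l<length (K # Ks). mv ((K # Ks)!l) x i * cnj (mv ((K # Ks)!l) x j)) $$ (i,j)"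
      using ij by simp
  qed (auto simp: e IH conj_pure[OF K])
qed

definition sf :: "complex mat \<Rightarrow> nat \<Rightarrow> (nat \<Rightarrow> complex) \<Rightarrow> (nat \<Rightarrow> complex) \<Rightarrow> complex" where
  "sf A n x y = (\<Sum>a<n. \<Sum>b<n. cnj (x a) * A $$ (a,b) * y b)"

lemma qf_sf: "qf A n x = sf A n x x" unfolding qf_def sf_def ..

lemma sf_expand: "sf A n (\<lambda>a. x a + t * y a) (\<lambda>a. x a + t * y a) =
   sf A n x x + t * sf A n x y + cnj t * sf A n y x + cnj t * t * sf A n y y"
  unfolding sf_def by (simp add: algebra_simps sum.distrib sum_distrib_left)

lemma psd_sf: assumes "psd n A" shows "sf A n x x \<in> \<real>" "0 \<le> Re (sf A n x x)"
  using assms unfolding psd_qf qf_sf by auto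

lemma psd_sf_herm: assumes A: "psd n A" shows "sf A n y x = cnj (sf A n x y)"
proof -
  let ?p = "sf A n x x" and ?q = "sf A n y y" and ?s1 = "sf A n x y" and ?s2 = "sf A n y x"
  have r1: "?p + ?s1 + ?s2 + ?q \<in> \<real>"
    using psd_sf(1)[OF A, of "\<lambda>a. x a + 1 * y a"] unfolding sf_expand by simp
  have r2: "?p + \<i> * ?s1 - \<i> * ?s2 + ?q \<in> \<real>"
    using psd_sf(1)[OF A, of "\<lambda>a. x a + \<i> * y a"] unfolding sf_expand by simp
  have p: "?p \<in> \<real>" and q: "?q \<in> \<real>" using psd_sf(1)[OF A] by auto
  have i1: "Im (?s1 + ?s2) = 0"
  proof -
    have "Im (?p + ?s1 + ?s2 + ?q) = 0" using r1 by (simp add: complex_is_Real_iff)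
    thus ?thesis using p q by (simp add: complex_is_Real_iff)
  qed
  have i2: "Re (?s1 - ?s2) = 0"
  proof -
    have "Im (?p + \<i> * ?s1 - \<i> * ?s2 + ?q) = 0" using r2 by (simp add: complex_is_Real_iff)
    thus ?thesis using p q by (simp add: complex_is_Real_iff)
  qed
  show ?thesis using i1 i2 by (simp add: complex_eq_iff)
qed

lemma cs_scalar:
  fixes P R :: real and s :: complex
  assumes P: "0 \<le> P" and R: "0 \<le> R" and H: "\<And>t. 0 \<le> P + 2 * Re (t * s) + (cmod t)^2 * R"
  shows "(cmod s)^2 \<le> P * R"
proof (cases "R = 0")
  case False
  hence R0: "R > 0" using R by simp
  have "0 \<le> P + 2 * Re ((- cnj s / complex_of_real R) * s) + (cmod (- cnj s / complex_of_real R))^2 * R" by (rule H)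
  also have "Re ((- cnj s / complex_of_real R) * s) = - ((cmod s)^2 / R)"
  proof -
    have "(- cnj s / complex_of_real R) * s = - (cnj s * s) / complex_of_real R" by simp
    also have "\<dots> = - complex_of_real ((cmod s)^2) / complex_of_real R" by (simp only: cnj_mult_self)
    also have "\<dots> = - complex_of_real ((cmod s)^2 / R)" by simp
    finally have "(- cnj s / complex_of_real R) * s = - complex_of_real ((cmod s)^2 / R)" .
    thus ?thesis by (simp only: uminus_complex.sel Re_complex_of_real)
  qed
  also have "(cmod (- cnj s / complex_of_real R))^2 * R = (cmod s)^2 / R"
    using R0 by (simp add: norm_divide power_divide power2_eq_square)
  finally have "0 \<le> P - (cmod s)^2 / R" by simp
  thus ?thesis using R0 by (simp add: field_simps)
next
  case True
  show ?thesis
  proof (rule ccontr)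
    assume "\<not> ?thesis"
    hence s0: "(cmod s)^2 > 0" using True by simp
    define u where "u = (P + 1) / (cmod s)^2"
    have h: "0 \<le> P + 2 * Re ((- complex_of_real u * cnj s) * s) + (cmod (- complex_of_real u * cnj s))^2 * R" by (rule H)
    have h2: "Re ((- complex_of_real u * cnj s) * s) = - (u * (cmod s)^2)"
    proof -
      have "(- complex_of_real u * cnj s) * s = - complex_of_real u * (cnj s * s)" by (simp add: mult.assoc)
      also have "\<dots> = - complex_of_real u * complex_of_real ((cmod s)^2)" by (simp only: cnj_mult_self)
      also have "\<dots> = - complex_of_real (u * (cmod s)^2)" by simp
      finally have "(- complex_of_real u * cnj s) * s = - complex_of_real (u * (cmod s)^2)" .
      thus ?thesis by (simp only: uminus_complex.sel Re_complex_of_real mult_minus_left)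
    qed
    have h3: "u * (cmod s)^2 = P + 1" unfolding u_def using s0 by simp
    show False using h unfolding h2 h3 using True P by simp
  qed
qed

definition bf :: "complex mat \<Rightarrow> nat \<Rightarrow> nat \<Rightarrow> (nat \<Rightarrow> nat \<Rightarrow> complex) \<Rightarrow> (nat \<Rightarrow> nat \<Rightarrow> complex) \<Rightarrow> complex" where
  "bf A n m x y = (\<Sum>k<m. sf A n (x k) (y k))"

lemma bf_cs: assumes A: "psd n A"
  shows "(cmod (bf A n m x y))^2 \<le> Re (bf A n m x x) * Re (bf A n m y y)"
proof (rule cs_scalar)
  show "0 \<le> Re (bf A n m x x)" unfolding bf_def using psd_sf(2)[OF A] by (simp add: sum_nonneg)
  show "0 \<le> Re (bf A n m y y)" unfolding bf_def using psd_sf(2)[OF A] by (simp add: sum_nonneg)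
  fix t
  have "0 \<le> Re (bf A n m (\<lambda>k a. x k a + t * y k a) (\<lambda>k a. x k a + t * y k a))"
    unfolding bf_def using psd_sf(2)[OF A] by (simp add: sum_nonneg)
  also have "bf A n m (\<lambda>k a. x k a + t * y k a) (\<lambda>k a. x k a + t * y k a) =
     bf A n m x x + t * bf A n m x y + cnj t * cnj (bf A n m x y) + cnj t * t * bf A n m y y"
    unfolding bf_def sf_expand psd_sf_herm[OF A, of "y _" "x _"]
    by (simp add: sum.distrib sum_distrib_left cnj_sum)
  also have "Re \<dots> = Re (bf A n m x x) + 2 * Re (t * bf A n m x y) + (cmod t)^2 * Re (bf A n m y y)"
  proof -
    have "Re (cnj t * t * bf A n m y y) = (cmod t)^2 * Re (bf A n m y y)"
      using cnj_mult_self[of t] by simp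
    moreover have "Re (cnj t * cnj (bf A n m x y)) = Re (t * bf A n m x y)"
      by (simp only: complex_cnj_mult[symmetric]) simp
    ultimately show ?thesis by simp
  qed
  finally show "0 \<le> Re (bf A n m x x) + 2 * Re (t * bf A n m x y) + (cmod t)^2 * Re (bf A n m y y)" .
qed

lemma sf_one_minus: assumes E: "E \<in> carrier_mat D D"
  shows "sf (1\<^sub>m D - E) D u v = (\<Sum>a<D. cnj (u a) * v a) - sf E D u v"
proof -
  have "sf (1\<^sub>m D - E) D u v = (\<Sum>a<D. \<Sum>b<D. cnj (u a) * ((if a = b then 1 else 0) - E $$ (a,b)) * v b)"
    unfolding sf_def using E by (intro sum.cong refl) auto
  also have "\<dots> = (\<Sum>a<D. (\<Sum>b<D. if a = b then cnj (u a) * v b else 0) - (\<Sum>b<D. cnj (u a) * E $$ (a,b) * v b))"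
    by (intro sum.cong refl, subst sum_subtractf[symmetric], rule sum.cong) (auto simp: algebra_simps)
  also have "\<dots> = (\<Sum>a<D. cnj (u a) * v a - (\<Sum>b<D. cnj (u a) * E $$ (a,b) * v b))"
    by (intro sum.cong refl) simp
  also have "\<dots> = (\<Sum>a<D. cnj (u a) * v a) - sf E D u v" unfolding sf_def by (simp add: sum_subtractf)
  finally show ?thesis .
qed

lemma cs_fam:
  assumes EC: "E \<in> carrier_mat D D" and E: "psd D E" and IE: "psd D (1\<^sub>m D - E)"
    and h1: "Re (bf E D m x x) = 1" and h2: "(\<Sum>k<m. \<Sum>I<D. (cmod (x k I))^2) = 1"
  shows "(cmod (\<Sum>k<m. \<Sum>I<D. cnj (x k I) * y k I))^2 \<le> Re (bf E D m y y)"
proof -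
  have e: "bf (1\<^sub>m D - E) D m u v = (\<Sum>k<m. \<Sum>I<D. cnj (u k I) * v k I) - bf E D m u v" for u v
    unfolding bf_def sf_one_minus[OF EC] by (simp add: sum_subtractf)
  have xx: "Re (bf (1\<^sub>m D - E) D m x x) = 0"
  proof -
    have "(\<Sum>k<m. \<Sum>I<D. cnj (x k I) * x k I) = complex_of_real (\<Sum>k<m. \<Sum>I<D. (cmod (x k I))^2)"
      by (simp only: cnj_mult_self of_real_sum)
    thus ?thesis unfolding e using h1 h2 by simp
  qed
  have "(cmod (bf (1\<^sub>m D - E) D m x y))^2 \<le> Re (bf (1\<^sub>m D - E) D m x x) * Re (bf (1\<^sub>m D - E) D m y y)"
    by (rule bf_cs[OF IE])
  hence "bf (1\<^sub>m D - E) D m x y = 0" unfolding xx by simp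
  hence eq: "(\<Sum>k<m. \<Sum>I<D. cnj (x k I) * y k I) = bf E D m x y" unfolding e by simp
  show ?thesis unfolding eq using bf_cs[OF E, of m x y] h1 by simp
qed

lemma kron_dims[simp]: "dim_row (kron A B) = dim_row A * dim_row B" "dim_col (kron A B) = dim_col A * dim_col B"
  by (simp_all add: kron_def)

lemma kron_index: "i < dim_row A * dim_row B \<Longrightarrow> j < dim_col A * dim_col B \<Longrightarrow>
  kron A B $$ (i,j) = A $$ (i div dim_row B, j div dim_col B) * B $$ (i mod dim_row B, j mod dim_col B)"
  by (simp add: kron_def)

lemma proj_dims[simp]: "dim_row (proj v) = dim_vec v" "dim_col (proj v) = dim_vec v"
  by (simp_all add: proj_def)

lemma proj_index: "i < dim_vec v \<Longrightarrow> j < dim_vec v \<Longrightarrow> proj v $$ (i,j) = v $ i * cnj (v $ j)"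
  by (simp add: proj_def)

lemma prob_kron:
  assumes EC: "E \<in> carrier_mat (D*dA) (D*dA)" and psi: "dim_vec \<psi> = dA" and dA: "0 < dA"
  shows "prob E (kron (mat D D (\<lambda>(i,j). \<Sum>l<L. w l i * cnj (w l j))) (proj \<psi>)) =
    Re (\<Sum>l<L. qf E (D*dA) (\<lambda>I. w l (I div dA) * \<psi> $ (I mod dA)))"
proof -
  define \<rho> where "\<rho> = kron (mat D D (\<lambda>(i,j). \<Sum>l<L. w l i * cnj (w l j))) (proj \<psi>)"
  define t where "t = (\<lambda>l I. w l (I div dA) * \<psi> $ (I mod dA))"
  have rC: "\<rho> \<in> carrier_mat (D*dA) (D*dA)" unfolding \<rho>_def by (rule carrier_matI) (simp_all add: psi)
  have rho: "\<rho> $$ (J,I) = (\<Sum>l<L. t l J * cnj (t l I))" if "J < D*dA" "I < D*dA" for I J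
  proof -
    have Jd: "J div dA < D" by (rule less_mult_imp_div_less) (use that in simp)
    have Id: "I div dA < D" by (rule less_mult_imp_div_less) (use that in simp)
    have "\<rho> $$ (J,I) = (\<Sum>l<L. w l (J div dA) * cnj (w l (I div dA))) * (\<psi> $ (J mod dA) * cnj (\<psi> $ (I mod dA)))"
      unfolding \<rho>_def using that psi Jd Id dA by (simp add: kron_index proj_index)
    also have "\<dots> = (\<Sum>l<L. t l J * cnj (t l I))" unfolding t_def
      by (simp add: sum_distrib_left sum_distrib_right mult_ac)
    finally show ?thesis .
  qed
  have "tr (E * \<rho>) = (\<Sum>I<D*dA. \<Sum>J<D*dA. E $$ (I,J) * \<rho> $$ (J,I))"
    unfolding tr_def using carrier_matD[OF EC] carrier_matD[OF rC] by (intro sum.cong refl) (simp_all add: scalar_prod_def atLeast0LessThan)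
  also have "\<dots> = (\<Sum>I<D*dA. \<Sum>J<D*dA. \<Sum>l<L. cnj (t l I) * E $$ (I,J) * t l J)"
    by (intro sum.cong refl) (simp add: rho sum_distrib_left mult_ac)
  also have "\<dots> = (\<Sum>I<D*dA. \<Sum>l<L. \<Sum>J<D*dA. cnj (t l I) * E $$ (I,J) * t l J)"
    by (intro sum.cong refl) (rule sum.swap)
  also have "\<dots> = (\<Sum>l<L. \<Sum>I<D*dA. \<Sum>J<D*dA. cnj (t l I) * E $$ (I,J) * t l J)"
    by (rule sum.swap)
  also have "\<dots> = (\<Sum>l<L. qf E (D*dA) (t l))" unfolding qf_def ..
  finally show ?thesis unfolding prob_def \<rho>_def[symmetric] t_def by simp
qed

lemma S_sum: fixes a m :: nat shows "(\<Sum>k<m. \<Sum>r<a. f (r*m + k)) = (\<Sum>t<a*m. f t)"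
  by (simp add: sum_split sum.swap[of _ "{..<m}"])

lemma div_mod_pair: assumes "s < (b::nat)" shows "(c*b + s) div b = c" "(c*b + s) mod b = s"
  using assms by auto

lemma mv_kron:
  assumes K: "K \<in> carrier_mat dR dS" and i: "i < dC * dR"
  shows "mv (kron (1\<^sub>m dC) K) x i = (\<Sum>s<dS. K $$ (i mod dR, s) * x ((i div dR)*dS + s))"
proof -
  have dR: "0 < dR" using i by (cases dR) auto
  have idc: "i div dR < dC" using i by (simp add: less_mult_imp_div_less)
  have imr: "i mod dR < dR" using dR by simp
  have "mv (kron (1\<^sub>m dC) K) x i = (\<Sum>t<dC*dS. kron (1\<^sub>m dC) K $$ (i,t) * x t)"
    unfolding mv_def using K by simp
  also have "\<dots> = (\<Sum>c<dC. \<Sum>s<dS. kron (1\<^sub>m dC) K $$ (i,c*dS+s) * x (c*dS+s))"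
    by (rule sum_split)
  also have "\<dots> = (\<Sum>c<dC. \<Sum>s<dS. (if i div dR = c then K $$ (i mod dR, s) * x (c*dS+s) else 0))"
  proof (intro sum.cong refl)
    fix c s assume c: "c \<in> {..<dC}" and s: "s \<in> {..<dS}"
    have cs: "c*dS + s < dC * dS"
    proof -
      have "c*dS + s < c*dS + dS" using s by simp
      also have "\<dots> = (c+1)*dS" by simp
      also have "\<dots> \<le> dC*dS" using c by (intro mult_right_mono) auto
      finally show ?thesis .
    qed
    show "kron (1\<^sub>m dC) K $$ (i,c*dS+s) * x (c*dS+s) = (if i div dR = c then K $$ (i mod dR, s) * x (c*dS+s) else 0)"
      using K i cs s c idc by (simp add: kron_index div_mod_pair)
  qed
  also have "\<dots> = (\<Sum>s<dS. K $$ (i mod dR, s) * x ((i div dR)*dS + s))"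
    by (subst sum.swap) (simp add: idc)
  finally show ?thesis .
qed

lemma psd_transpose: assumes "psd n A" shows "psd n (transpose_mat A)"
proof -
  have AC: "A \<in> carrier_mat n n" using assms unfolding psd_def by auto
  have "qf (transpose_mat A) n v = qf A n (\<lambda>i. cnj (v i))" for v
  proof -
    have "qf (transpose_mat A) n v = (\<Sum>i<n. \<Sum>j<n. cnj (v i) * A $$ (j,i) * v j)"
      unfolding qf_def using AC by (intro sum.cong refl) auto
    also have "\<dots> = (\<Sum>j<n. \<Sum>i<n. cnj (v i) * A $$ (j,i) * v j)" by (rule sum.swap)
    also have "\<dots> = qf A n (\<lambda>i. cnj (v i))" unfolding qf_def by (intro sum.cong refl) (simp add: mult_ac)
    finally show ?thesis .
  qed
  thus ?thesis using assms AC unfolding psd_qf by auto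
qed

lemma kron_one1: assumes "M \<in> carrier_mat a b" shows "kron (1\<^sub>m 1) M = M"
  using assms by (intro eq_matI) (auto simp: kron_index)

lemma ptrace_index: "i < dA \<Longrightarrow> j < dA \<Longrightarrow> ptrace2 dA dB A $$ (i,j) = (\<Sum>k<dB. A $$ (i*dB + k, j*dB + k))"
  by (simp add: ptrace2_def)

lemma ptrace_dims[simp]: "dim_row (ptrace2 dA dB A) = dA" "dim_col (ptrace2 dA dB A) = dA"
  by (simp_all add: ptrace2_def)

lemma sum_pad: fixes L m :: nat assumes "L \<le> m" "\<And>k. L \<le> k \<Longrightarrow> k < m \<Longrightarrow> f k = 0"
  shows "(\<Sum>k<m. f k) = (\<Sum>k<L. f k)"
proof -
  have "(\<Sum>k<m. f k) = (\<Sum>k<L. f k) + (\<Sum>k\<in>{L..<m}. f k)"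
    using assms(1) by (simp add: lessThan_atLeast0 sum.atLeastLessThan_concat)
  also have "(\<Sum>k\<in>{L..<m}. f k) = 0" using assms(2) by (intro sum.neutral) auto
  finally show ?thesis by simp
qed

locale att =
  fixes dA dC dR :: nat and \<psi> :: "complex vec" and Ks :: "bool \<Rightarrow> complex mat list" and Acc :: "bool \<Rightarrow> complex mat"
  assumes dA: "0 < dA" and dC: "0 < dC" and dR: "0 < dR"
    and psi: "\<psi> \<in> carrier_vec dA" and unit: "(\<Sum>i<dA. cmod (\<psi> $ i)^2) = 1"
    and kr: "\<And>b. kraus dA (dC*dR) (Ks b)"
    and acc: "\<And>b. povm_elem (dC*dR*dA) (Acc b)"
    and corr: "\<And>b. prob (Acc b) (kron (apply_ch (dC*dR) (Ks b) (proj \<psi>)) (proj \<psi>)) = 1"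
begin

definition m where "m = length (Ks False) + length (Ks True) + 1"
definition dS where "dS = dR * m"
definition Kp where "Kp b k = (if k < length (Ks b) then Ks b ! k else 0\<^sub>m (dC*dR) dA)"
definition kv where "kv b k i = mv (Kp b k) (\<lambda>a. \<psi> $ a) i"
definition Nb where "Nb b = mat dS dC (\<lambda>(s,c). kv b (s mod m) (c*dR + s div m))"

lemma m_pos: "0 < m" and Lm: "length (Ks b) \<le> m" unfolding m_def by (cases b; simp)+

lemma dS_pos: "0 < dS" unfolding dS_def using dR m_pos by simp

lemma Ks_carrier: "K \<in> set (Ks b) \<Longrightarrow> K \<in> carrier_mat (dC*dR) dA"
  using kr[of b] unfolding kraus_def by auto

lemma Kp_carrier: "Kp b k \<in> carrier_mat (dC*dR) dA"
  unfolding Kp_def using Ks_carrier nth_mem by auto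

lemma Kp_dims[simp]: "dim_row (Kp b k) = dC*dR" "dim_col (Kp b k) = dA"
  using Kp_carrier[of b k] by auto

lemma Ks_sum: assumes "a < dA" "a' < dA"
  shows "(\<Sum>l<length (Ks b). (adj (Ks b ! l) * Ks b ! l) $$ (a,a')) = (if a = a' then 1 else 0)"
proof -
  have "foldr (\<lambda>K acc. adj K * K + acc) (Ks b) (0\<^sub>m dA dA) = 1\<^sub>m dA" using kr[of b] unfolding kraus_def by auto
  hence "mat dA dA (\<lambda>(a,b'). \<Sum>l<length (Ks b). (adj (Ks b ! l) * Ks b ! l) $$ (a,b')) = 1\<^sub>m dA"
    using kraus_foldr[of "Ks b" "dC*dR" dA] Ks_carrier by auto
  hence "mat dA dA (\<lambda>(a,b'). \<Sum>l<length (Ks b). (adj (Ks b ! l) * Ks b ! l) $$ (a,b')) $$ (a,a') = 1\<^sub>m dA $$ (a,a')"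
    by simp
  thus ?thesis using assms by simp
qed

lemma Kp_sum: assumes "a < dA" "a' < dA"
  shows "(\<Sum>k<m. (adj (Kp b k) * Kp b k) $$ (a,a')) = (if a = a' then 1 else 0)"
proof -
  have "(\<Sum>k<m. (adj (Kp b k) * Kp b k) $$ (a,a')) = (\<Sum>k<length (Ks b). (adj (Kp b k) * Kp b k) $$ (a,a'))"
    using assms Lm by (intro sum_pad) (auto simp: Kp_def)
  also have "\<dots> = (\<Sum>l<length (Ks b). (adj (Ks b ! l) * Ks b ! l) $$ (a,a'))"
    by (intro sum.cong refl) (simp add: Kp_def)
  finally show ?thesis using Ks_sum[OF assms] by simp
qed

lemma kv_zero: "length (Ks b) \<le> k \<Longrightarrow> i < dC*dR \<Longrightarrow> kv b k i = 0"
  unfolding kv_def mv_def Kp_def by simp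

lemma norm_sum: "(\<Sum>k<m. \<Sum>i<dC*dR. (cmod (kv b k i))^2) = 1"
proof -
  have "(\<Sum>k<m. qf (adj (Kp b k) * Kp b k) dA (\<lambda>a. \<psi> $ a)) =
     (\<Sum>k<m. complex_of_real (\<Sum>i<dC*dR. (cmod (\<Sum>a<dA. Kp b k $$ (i,a) * \<psi> $ a))^2))"
    by (intro sum.cong refl) (rule qf_gram[OF Kp_carrier])
  also have "\<dots> = complex_of_real (\<Sum>k<m. \<Sum>i<dC*dR. (cmod (kv b k i))^2)"
    unfolding of_real_sum kv_def mv_def using Kp_carrier[of b] by simp
  finally have "complex_of_real (\<Sum>k<m. \<Sum>i<dC*dR. (cmod (kv b k i))^2) = (\<Sum>k<m. qf (adj (Kp b k) * Kp b k) dA (\<lambda>a. \<psi> $ a))" by simp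
  also have "\<dots> = (\<Sum>k<m. \<Sum>a<dA. \<Sum>a'<dA. cnj (\<psi> $ a) * (adj (Kp b k) * Kp b k) $$ (a,a') * \<psi> $ a')"
    unfolding qf_def ..
  also have "\<dots> = (\<Sum>a<dA. \<Sum>a'<dA. cnj (\<psi> $ a) * (\<Sum>k<m. (adj (Kp b k) * Kp b k) $$ (a,a')) * \<psi> $ a')"
    by (simp add: sum_distrib_left sum_distrib_right sum.swap[of _ "{..<m}"])
  also have "\<dots> = (\<Sum>a<dA. \<Sum>a'<dA. if a = a' then cnj (\<psi> $ a) * \<psi> $ a' else 0)"
    by (intro sum.cong refl) (simp add: Kp_sum del: index_mult_mat)
  also have "\<dots> = (\<Sum>a<dA. complex_of_real ((cmod (\<psi> $ a))^2))"
    by (intro sum.cong refl) (simp add: cnj_mult_self)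
  also have "\<dots> = 1" using unit by (simp only: of_real_sum[symmetric]) simp
  finally show ?thesis by (simp only: of_real_eq_1_iff)
qed

lemma Nb_carrier: "Nb b \<in> carrier_mat dS dC" unfolding Nb_def by simp

lemma rmk: assumes "r < dR" "k < m" shows "r*m + k < dS" "(r*m + k) mod m = k" "(r*m + k) div m = r"
proof -
  have "r*m + k < r*m + m" using assms by simp
  also have "\<dots> = (r+1)*m" by simp
  also have "\<dots> \<le> dR*m" using assms by (intro mult_right_mono) auto
  finally show "r*m + k < dS" unfolding dS_def .
  show "(r*m + k) mod m = k" "(r*m + k) div m = r" using assms by auto
qed

lemma crd: assumes "c < dC" "r < dR" shows "c*dR + r < dC*dR"
proof -
  have "c*dR + r < c*dR + dR" using assms by simp
  also have "\<dots> = (c+1)*dR" by simp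
  also have "\<dots> \<le> dC*dR" using assms by (intro mult_right_mono) auto
  finally show ?thesis .
qed

lemma Nb_index: assumes "r < dR" "k < m" "c < dC" shows "Nb b $$ (r*m + k, c) = kv b k (c*dR + r)"
  unfolding Nb_def using rmk[OF assms(1,2)] assms by simp

lemma trN: "tr (adj (Nb b) * Nb b) = 1"
proof -
  have "tr (adj (Nb b) * Nb b) = complex_of_real (\<Sum>c<dC. \<Sum>s<dS. (cmod (Nb b $$ (s,c)))^2)"
    by (rule tr_gram[OF Nb_carrier])
  also have "(\<Sum>c<dC. \<Sum>s<dS. (cmod (Nb b $$ (s,c)))^2) = (\<Sum>c<dC. \<Sum>k<m. \<Sum>r<dR. (cmod (kv b k (c*dR + r)))^2)"
    unfolding dS_def S_sum[symmetric] by (intro sum.cong refl) (simp add: Nb_index)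
  also have "\<dots> = (\<Sum>k<m. \<Sum>c<dC. \<Sum>r<dR. (cmod (kv b k (c*dR + r)))^2)" by (rule sum.swap)
  also have "\<dots> = (\<Sum>k<m. \<Sum>i<dC*dR. (cmod (kv b k i))^2)" by (simp add: sum_split)
  also have "\<dots> = 1" by (rule norm_sum)
  finally show ?thesis by simp
qed

lemma proj_psi: "proj \<psi> = mat dA dA (\<lambda>(i,j). \<psi> $ i * cnj (\<psi> $ j))"
  unfolding proj_def using psi by simp

lemma honest_formula:
  "apply_ch (dC*dR) (Ks b) (proj \<psi>) = mat (dC*dR) (dC*dR) (\<lambda>(i,j). \<Sum>k<m. kv b k i * cnj (kv b k j))"
proof -
  have "apply_ch (dC*dR) (Ks b) (proj \<psi>) = mat (dC*dR) (dC*dR)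
      (\<lambda>(i,j). \<Sum>l<length (Ks b). mv (Ks b ! l) (\<lambda>a. \<psi> $ a) i * cnj (mv (Ks b ! l) (\<lambda>a. \<psi> $ a) j))"
    unfolding proj_psi by (rule apply_ch_pure) (use Ks_carrier in blast)
  also have "\<dots> = mat (dC*dR) (dC*dR) (\<lambda>(i,j). \<Sum>k<m. kv b k i * cnj (kv b k j))"
  proof (rule eq_matI)
    fix i j assume "i < dim_row (mat (dC*dR) (dC*dR) (\<lambda>(i,j). \<Sum>k<m. kv b k i * cnj (kv b k j)))"
       "j < dim_col (mat (dC*dR) (dC*dR) (\<lambda>(i,j). \<Sum>k<m. kv b k i * cnj (kv b k j)))"
    hence ij: "i < dC*dR" "j < dC*dR" by auto
    have "(\<Sum>k<m. kv b k i * cnj (kv b k j)) = (\<Sum>k<length (Ks b). kv b k i * cnj (kv b k j))"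
      using Lm ij by (intro sum_pad) (auto simp: kv_zero)
    also have "\<dots> = (\<Sum>l<length (Ks b). mv (Ks b ! l) (\<lambda>a. \<psi> $ a) i * cnj (mv (Ks b ! l) (\<lambda>a. \<psi> $ a) j))"
      by (intro sum.cong refl) (simp add: kv_def Kp_def)
    finally show "mat (dC*dR) (dC*dR)
      (\<lambda>(i,j). \<Sum>l<length (Ks b). mv (Ks b ! l) (\<lambda>a. \<psi> $ a) i * cnj (mv (Ks b ! l) (\<lambda>a. \<psi> $ a) j)) $$ (i,j)
      = mat (dC*dR) (dC*dR) (\<lambda>(i,j). \<Sum>k<m. kv b k i * cnj (kv b k j)) $$ (i,j)" using ij by simp
  qed auto
  finally show ?thesis .
qed

lemma Acc_carrier: "Acc b \<in> carrier_mat (dC*dR*dA) (dC*dR*dA)"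
  using acc[of b] unfolding povm_elem_def psd_def by auto

lemma corr': "Re (\<Sum>k<m. qf (Acc b) (dC*dR*dA) (\<lambda>I. kv b k (I div dA) * \<psi> $ (I mod dA))) = 1"
proof -
  have "prob (Acc b) (kron (mat (dC*dR) (dC*dR) (\<lambda>(i,j). \<Sum>k<m. kv b k i * cnj (kv b k j))) (proj \<psi>)) =
    Re (\<Sum>k<m. qf (Acc b) (dC*dR*dA) (\<lambda>I. kv b k (I div dA) * \<psi> $ (I mod dA)))"
    by (rule prob_kron[OF Acc_carrier[of b]]) (use psi dA in auto)
  thus ?thesis using corr[of b] unfolding honest_formula by simp
qed

definition G where "G = mat (dC*dS) dA (\<lambda>(i,a). Kp False ((i mod dS) mod m) $$ ((i div dS)*dR + (i mod dS) div m, a))"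
definition Phi0 where "Phi0 i = kv False ((i mod dS) mod m) ((i div dS)*dR + (i mod dS) div m)"
definition wv where "wv K i = (\<Sum>s<dS. K $$ (i mod dR, s) * Phi0 ((i div dR)*dS + s))"
definition T :: "nat \<Rightarrow> complex mat" where "T k = mat dR dS (\<lambda>(r,s). if s = r*m + k then 1 else 0)"

lemma G_carrier: "G \<in> carrier_mat (dC*dS) dA" unfolding G_def by simp

lemma mv_G: "i < dC*dS \<Longrightarrow> mv G (\<lambda>a. \<psi> $ a) i = Phi0 i"
  unfolding mv_def Phi0_def kv_def G_def by simp

lemma csd: assumes "c < dC" "s < dS" shows "c*dS + s < dC*dS" "(c*dS + s) div dS = c" "(c*dS + s) mod dS = s"
proof -
  have "c*dS + s < c*dS + dS" using assms by simp
  also have "\<dots> = (c+1)*dS" by simp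
  also have "\<dots> \<le> dC*dS" using assms by (intro mult_right_mono) auto
  finally show "c*dS + s < dC*dS" .
  show "(c*dS + s) div dS = c" "(c*dS + s) mod dS = s" using assms by auto
qed

lemma Phi0_N: assumes "c < dC" "s < dS" shows "Phi0 (c*dS + s) = Nb False $$ (s,c)"
  unfolding Phi0_def Nb_def using assms csd[OF assms] by simp

lemma G_kraus: "kraus dA (dC*dS) [G]"
proof -
  have "adj G * G = 1\<^sub>m dA"
  proof (rule eq_matI)
    fix a a' assume "a < dim_row (1\<^sub>m dA)" "a' < dim_col (1\<^sub>m dA)"
    hence aa: "a < dA" "a' < dA" by auto
    define f where "f = (\<lambda>k j. cnj (Kp False k $$ (j,a)) * Kp False k $$ (j,a'))"
    have "(adj G * G) $$ (a,a') = (\<Sum>i<dC*dS. cnj (G $$ (i,a)) * G $$ (i,a'))"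
      using aa G_carrier by (simp add: scalar_prod_def atLeast0LessThan)
    also have "\<dots> = (\<Sum>c<dC. \<Sum>s<dS. cnj (G $$ (c*dS+s,a)) * G $$ (c*dS+s,a'))" by (rule sum_split)
    also have "\<dots> = (\<Sum>c<dC. \<Sum>s<dS. f (s mod m) (c*dR + s div m))"
      using aa by (intro sum.cong refl) (simp add: G_def csd f_def)
    also have "\<dots> = (\<Sum>c<dC. \<Sum>k<m. \<Sum>r<dR. f k (c*dR + r))"
      unfolding dS_def S_sum[symmetric] by (intro sum.cong refl) simp
    also have "\<dots> = (\<Sum>k<m. \<Sum>c<dC. \<Sum>r<dR. f k (c*dR + r))" by (rule sum.swap)
    also have "\<dots> = (\<Sum>k<m. \<Sum>j<dC*dR. f k j)" by (simp add: sum_split)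
    also have "\<dots> = (\<Sum>k<m. (adj (Kp False k) * Kp False k) $$ (a,a'))"
      unfolding f_def using aa by (intro sum.cong refl) (simp add: scalar_prod_def atLeast0LessThan)
    also have "\<dots> = 1\<^sub>m dA $$ (a,a')" using Kp_sum[OF aa] aa by simp
    finally show "(adj G * G) $$ (a,a') = 1\<^sub>m dA $$ (a,a')" .
  qed (use G_carrier in auto)
  thus ?thesis unfolding kraus_def using G_carrier by simp
qed

lemma mal_formula:
  assumes M: "\<forall>K\<in>set M. K \<in> carrier_mat dR dS"
  shows "apply_ch (dC*dR) (on_second dC M) (apply_ch (dC*dS) [G] (proj \<psi>)) =
    mat (dC*dR) (dC*dR) (\<lambda>(i,j). \<Sum>l<length M. wv (M!l) i * cnj (wv (M!l) j))"
proof -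
  have s1: "apply_ch (dC*dS) [G] (proj \<psi>) = mat (dC*dS) (dC*dS) (\<lambda>(i,j). Phi0 i * cnj (Phi0 j))"
  proof -
    have "apply_ch (dC*dS) [G] (proj \<psi>) = mat (dC*dS) (dC*dS)
       (\<lambda>(i,j). \<Sum>l<length [G]. mv ([G]!l) (\<lambda>a. \<psi> $ a) i * cnj (mv ([G]!l) (\<lambda>a. \<psi> $ a) j))"
      unfolding proj_psi by (rule apply_ch_pure) (use G_carrier in auto)
    also have "\<dots> = mat (dC*dS) (dC*dS) (\<lambda>(i,j). Phi0 i * cnj (Phi0 j))"
      by (intro eq_matI) (auto simp: mv_G)
    finally show ?thesis .
  qed
  have oC: "\<forall>K\<in>set (on_second dC M). K \<in> carrier_mat (dC*dR) (dC*dS)"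
    using M unfolding on_second_def by (auto intro!: carrier_matI)
  have "apply_ch (dC*dR) (on_second dC M) (apply_ch (dC*dS) [G] (proj \<psi>)) = mat (dC*dR) (dC*dR)
    (\<lambda>(i,j). \<Sum>l<length (on_second dC M). mv (on_second dC M ! l) Phi0 i * cnj (mv (on_second dC M ! l) Phi0 j))"
    unfolding s1 by (rule apply_ch_pure[OF oC])
  also have "\<dots> = mat (dC*dR) (dC*dR) (\<lambda>(i,j). \<Sum>l<length M. wv (M!l) i * cnj (wv (M!l) j))"
  proof (rule eq_matI)
    fix i j assume "i < dim_row (mat (dC*dR) (dC*dR) (\<lambda>(i,j). \<Sum>l<length M. wv (M!l) i * cnj (wv (M!l) j)))"
      "j < dim_col (mat (dC*dR) (dC*dR) (\<lambda>(i,j). \<Sum>l<length M. wv (M!l) i * cnj (wv (M!l) j)))"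
    hence ij: "i < dC*dR" "j < dC*dR" by auto
    have "mv (on_second dC M ! l) Phi0 i = wv (M!l) i" "mv (on_second dC M ! l) Phi0 j = wv (M!l) j" if "l < length M" for l
      unfolding on_second_def wv_def using that M ij by (auto intro!: mv_kron)
    thus "mat (dC*dR) (dC*dR) (\<lambda>(i,j). \<Sum>l<length (on_second dC M). mv (on_second dC M ! l) Phi0 i * cnj (mv (on_second dC M ! l) Phi0 j)) $$ (i,j) =
      mat (dC*dR) (dC*dR) (\<lambda>(i,j). \<Sum>l<length M. wv (M!l) i * cnj (wv (M!l) j)) $$ (i,j)"
      using ij by (simp add: on_second_def)
  qed auto
  finally show ?thesis .
qed

lemma T_carrier: "T k \<in> carrier_mat dR dS" unfolding T_def by simp
lemma T_dims[simp]: "dim_row (T k) = dR" "dim_col (T k) = dS" unfolding T_def by simp_all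
lemma T_index: "r < dR \<Longrightarrow> s < dS \<Longrightarrow> T k $$ (r,s) = (if s = r*m + k then 1 else 0)"
  unfolding T_def by simp

lemma T_kraus: "kraus dS dR (map T [0..<m])"
proof -
  have C: "\<forall>K\<in>set (map T [0..<m]). K \<in> carrier_mat dR dS" using T_carrier by auto
  have "mat dS dS (\<lambda>(a,b). \<Sum>l<length (map T [0..<m]). (adj (map T [0..<m] ! l) * map T [0..<m] ! l) $$ (a,b)) = 1\<^sub>m dS"
  proof (rule eq_matI)
    fix s s' assume "s < dim_row (1\<^sub>m dS)" "s' < dim_col (1\<^sub>m dS)"
    hence ss: "s < dS" "s' < dS" by auto
    have "(\<Sum>l<length (map T [0..<m]). (adj (map T [0..<m] ! l) * map T [0..<m] ! l) $$ (s,s'))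
      = (\<Sum>k<m. \<Sum>r<dR. cnj (T k $$ (r,s)) * T k $$ (r,s'))"
      using ss T_carrier by (intro sum.cong refl) (simp_all add: scalar_prod_def atLeast0LessThan)
    also have "\<dots> = (\<Sum>k<m. \<Sum>r<dR. (\<lambda>t. if s = t \<and> s' = t then 1 else 0) (r*m + k))"
      using ss by (intro sum.cong refl) (auto simp: T_index)
    also have "\<dots> = (\<Sum>t<dR*m. if s = t \<and> s' = t then 1 else 0)" by (rule S_sum)
    also have "\<dots> = 1\<^sub>m dS $$ (s,s')"
    proof (cases "s = s'")
      case True thus ?thesis using ss unfolding dS_def by (simp add: sum.delta)
    next
      case False thus ?thesis using ss unfolding dS_def by (intro trans[OF sum.neutral]) auto
    qed
    finally show "mat dS dS (\<lambda>(a,b). \<Sum>l<length (map T [0..<m]). (adj (map T [0..<m] ! l) * map T [0..<m] ! l) $$ (a,b)) $$ (s,s') = 1\<^sub>m dS $$ (s,s')"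
      using ss by simp
  qed auto
  thus ?thesis unfolding kraus_def using C kraus_foldr[OF C] by simp
qed

lemma wv_T: assumes i: "i < dC*dR" and k: "k < m" shows "wv (T k) i = kv False k i"
proof -
  have idc: "i div dR < dC" using i by (simp add: less_mult_imp_div_less)
  have imr: "i mod dR < dR" using dR by simp
  have t: "(i mod dR)*m + k < dS" using rmk[OF imr k] by simp
  have "wv (T k) i = (\<Sum>s<dS. if s = (i mod dR)*m + k then Phi0 ((i div dR)*dS + s) else 0)"
    unfolding wv_def using imr by (intro sum.cong refl) (simp add: T_index)
  also have "\<dots> = Phi0 ((i div dR)*dS + ((i mod dR)*m + k))" using t by (simp add: sum.delta)
  also have "\<dots> = Nb False $$ ((i mod dR)*m + k, i div dR)" by (rule Phi0_N[OF idc t])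
  also have "\<dots> = kv False k ((i div dR)*dR + i mod dR)" by (rule Nb_index[OF imr k idc])
  also have "(i div dR)*dR + i mod dR = i" by simp
  finally show ?thesis .
qed

lemma p0: "prob (Acc False) (kron (apply_ch (dC*dR) (on_second dC (map T [0..<m])) (apply_ch (dC*dS) [G] (proj \<psi>))) (proj \<psi>)) = 1"
proof -
  have "apply_ch (dC*dR) (on_second dC (map T [0..<m])) (apply_ch (dC*dS) [G] (proj \<psi>)) =
     apply_ch (dC*dR) (Ks False) (proj \<psi>)"
    unfolding honest_formula
    by (subst mal_formula) (auto simp: T_carrier wv_T intro!: eq_matI sum.cong)
  thus ?thesis using corr[of False] by simp
qed

definition rowop :: "complex mat \<Rightarrow> nat \<Rightarrow> complex mat" where "rowop F l = mat dR dS (\<lambda>(r,s). if r = 0 then F $$ (l,s) else 0)"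

lemma gram_index: "K \<in> carrier_mat a b \<Longrightarrow> s < b \<Longrightarrow> s' < b \<Longrightarrow> (adj K * K) $$ (s,s') = (\<Sum>r<a. cnj (K $$ (r,s)) * K $$ (r,s'))"
  by (simp add: scalar_prod_def atLeast0LessThan)

definition Mt where "Mt V F1 F2 = map (\<lambda>k. T k * V) [0..<m] @ map (rowop F1) [0..<dS] @ map (rowop F2) [0..<dC]"

lemma Mt_sum: "(\<Sum>l<length (Mt V F1 F2). f (Mt V F1 F2 ! l)) = (\<Sum>k<m. f (T k * V)) + ((\<Sum>l<dS. f (rowop F1 l)) + (\<Sum>l<dC. f (rowop F2 l)))"
  unfolding Mt_def sum_append_nth[of f] by simp

lemma rowop_carrier: "rowop F l \<in> carrier_mat dR dS" unfolding rowop_def by simp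

lemma TV_index: assumes V: "V \<in> carrier_mat dS dS" and r: "r < dR" and s: "s < dS" and k: "k < m"
  shows "(T k * V) $$ (r,s) = V $$ (r*m + k, s)"
proof -
  have "(T k * V) $$ (r,s) = (\<Sum>t<dS. T k $$ (r,t) * V $$ (t,s))"
    using V r s by (simp add: scalar_prod_def atLeast0LessThan)
  also have "\<dots> = (\<Sum>t<dS. if t = r*m + k then V $$ (t,s) else 0)"
    using r by (intro sum.cong refl) (simp add: T_index)
  also have "\<dots> = V $$ (r*m + k, s)" using rmk[OF r k] by (simp add: sum.delta)
  finally show ?thesis .
qed

lemma rowop_gram: assumes F: "F \<in> carrier_mat a dS" and s: "s < dS" "s' < dS"
  shows "(\<Sum>l<a. (adj (rowop F l) * rowop F l) $$ (s,s')) = (adj F * F) $$ (s,s')"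
proof -
  have "(\<Sum>l<a. (adj (rowop F l) * rowop F l) $$ (s,s')) = (\<Sum>l<a. \<Sum>r<dR. cnj (rowop F l $$ (r,s)) * rowop F l $$ (r,s'))"
    using s rowop_carrier by (intro sum.cong refl) (simp add: scalar_prod_def atLeast0LessThan rowop_def)
  also have "\<dots> = (\<Sum>l<a. cnj (F $$ (l,s)) * F $$ (l,s'))"
  proof (intro sum.cong refl)
    fix l
    have "(\<Sum>r<dR. cnj (rowop F l $$ (r,s)) * rowop F l $$ (r,s')) = (\<Sum>r<dR. if r = 0 then cnj (F $$ (l,s)) * F $$ (l,s') else 0)"
      using s by (intro sum.cong refl) (simp add: rowop_def)
    also have "\<dots> = cnj (F $$ (l,s)) * F $$ (l,s')" using dR by (simp add: sum.delta)
    finally show "(\<Sum>r<dR. cnj (rowop F l $$ (r,s)) * rowop F l $$ (r,s')) = cnj (F $$ (l,s)) * F $$ (l,s')" .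
  qed
  also have "\<dots> = (adj F * F) $$ (s,s')" using F s by (simp add: scalar_prod_def atLeast0LessThan)
  finally show ?thesis .
qed

lemma TV_gram: assumes V: "V \<in> carrier_mat dS dS" and s: "s < dS" "s' < dS"
  shows "(\<Sum>k<m. (adj (T k * V) * (T k * V)) $$ (s,s')) = (adj V * V) $$ (s,s')"
proof -
  have "(\<Sum>k<m. (adj (T k * V) * (T k * V)) $$ (s,s')) = (\<Sum>k<m. \<Sum>r<dR. cnj ((T k * V) $$ (r,s)) * (T k * V) $$ (r,s'))"
    using s V T_carrier by (intro sum.cong refl gram_index) auto
  also have "\<dots> = (\<Sum>k<m. \<Sum>r<dR. (\<lambda>t. cnj (V $$ (t,s)) * V $$ (t,s')) (r*m + k))"
    using s V by (intro sum.cong refl) (simp add: TV_index del: index_mult_mat)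
  also have "\<dots> = (\<Sum>t<dR*m. cnj (V $$ (t,s)) * V $$ (t,s'))" by (rule S_sum)
  also have "\<dots> = (adj V * V) $$ (s,s')" using V s unfolding dS_def by (simp add: scalar_prod_def atLeast0LessThan)
  finally show ?thesis .
qed

lemma Mt_carrier: assumes V: "V \<in> carrier_mat dS dS" shows "\<forall>K\<in>set (Mt V F1 F2). K \<in> carrier_mat dR dS"
  unfolding Mt_def using V T_carrier rowop_carrier by auto

lemma Mt_kraus:
  assumes V: "V \<in> carrier_mat dS dS" and F1: "F1 \<in> carrier_mat dS dS" and F2: "F2 \<in> carrier_mat dC dS"
    and sum1: "adj V * V + adj F1 * F1 + adj F2 * F2 = 1\<^sub>m dS"
  shows "kraus dS dR (Mt V F1 F2)"
proof -
  note C = Mt_carrier[OF V, of F1 F2]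
  have "mat dS dS (\<lambda>(a,b). \<Sum>l<length (Mt V F1 F2). (adj (Mt V F1 F2 ! l) * Mt V F1 F2 ! l) $$ (a,b)) = 1\<^sub>m dS"
  proof (rule eq_matI)
    fix s s' assume "s < dim_row (1\<^sub>m dS)" "s' < dim_col (1\<^sub>m dS)"
    hence ss: "s < dS" "s' < dS" by auto
    have "(\<Sum>l<length (Mt V F1 F2). (adj (Mt V F1 F2 ! l) * Mt V F1 F2 ! l) $$ (s,s'))
      = (\<Sum>k<m. (adj (T k * V) * (T k * V)) $$ (s,s')) + ((\<Sum>l<dS. (adj (rowop F1 l) * rowop F1 l) $$ (s,s'))
         + (\<Sum>l<dC. (adj (rowop F2 l) * rowop F2 l) $$ (s,s')))"
      by (rule Mt_sum)
    also have "\<dots> = (adj V * V) $$ (s,s') + ((adj F1 * F1) $$ (s,s') + (adj F2 * F2) $$ (s,s'))"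
      using TV_gram[OF V ss] rowop_gram[OF F1 ss] rowop_gram[OF F2 ss] by simp
    also have "\<dots> = (adj V * V + adj F1 * F1 + adj F2 * F2) $$ (s,s')"
      using V F1 F2 ss by simp
    also have "\<dots> = 1\<^sub>m dS $$ (s,s')" unfolding sum1 ..
    finally show "mat dS dS (\<lambda>(a,b). \<Sum>l<length (Mt V F1 F2). (adj (Mt V F1 F2 ! l) * Mt V F1 F2 ! l) $$ (a,b)) $$ (s,s') = 1\<^sub>m dS $$ (s,s')"
      using ss by simp
  qed auto
  thus ?thesis unfolding kraus_def using C kraus_foldr[OF C] by simp
qed

lemma tensor_inner: "(\<Sum>I<D*dA. cnj (g (I div dA) * \<psi> $ (I mod dA)) * (h (I div dA) * \<psi> $ (I mod dA))) = (\<Sum>i<D. cnj (g i) * h i)"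
proof -
  have "(\<Sum>I<D*dA. cnj (g (I div dA) * \<psi> $ (I mod dA)) * (h (I div dA) * \<psi> $ (I mod dA)))
     = (\<Sum>i<D. \<Sum>a<dA. cnj (g i * \<psi> $ a) * (h i * \<psi> $ a))"
    by (simp add: sum_split)
  also have "\<dots> = (\<Sum>i<D. cnj (g i) * h i * (\<Sum>a<dA. cnj (\<psi> $ a) * \<psi> $ a))"
    by (simp add: sum_distrib_left mult_ac)
  also have "(\<Sum>a<dA. cnj (\<psi> $ a) * \<psi> $ a) = 1"
    using unit by (simp only: cnj_mult_self of_real_sum[symmetric]) simp
  finally show ?thesis by simp
qed

lemma wv_TV: assumes V: "V \<in> carrier_mat dS dS" and i: "i < dC*dR" and k: "k < m"
  shows "wv (T k * V) i = (V * Nb False) $$ ((i mod dR)*m + k, i div dR)"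
proof -
  have idc: "i div dR < dC" using i by (simp add: less_mult_imp_div_less)
  have imr: "i mod dR < dR" using dR by simp
  have t: "(i mod dR)*m + k < dS" using rmk[OF imr k] by simp
  have "wv (T k * V) i = (\<Sum>s<dS. V $$ ((i mod dR)*m + k, s) * Nb False $$ (s, i div dR))"
    unfolding wv_def using imr idc by (intro sum.cong refl) (simp add: TV_index[OF V] k Phi0_N del: index_mult_mat)
  also have "\<dots> = (V * Nb False) $$ ((i mod dR)*m + k, i div dR)"
    using V t idc Nb_carrier[of False] by (simp add: scalar_prod_def atLeast0LessThan)
  finally show ?thesis .
qed

lemma overlap: assumes V: "V \<in> carrier_mat dS dS"
  shows "(\<Sum>k<m. \<Sum>i<dC*dR. cnj (kv True k i) * wv (T k * V) i) = tr (adj (Nb True) * V * Nb False)"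
proof -
  define f where "f = (\<lambda>s c. cnj (Nb True $$ (s,c)) * (V * Nb False) $$ (s,c))"
  have "(\<Sum>k<m. \<Sum>i<dC*dR. cnj (kv True k i) * wv (T k * V) i) = (\<Sum>k<m. \<Sum>c<dC. \<Sum>r<dR. cnj (kv True k (c*dR+r)) * wv (T k * V) (c*dR+r))"
    by (simp add: sum_split)
  also have "\<dots> = (\<Sum>k<m. \<Sum>c<dC. \<Sum>r<dR. f (r*m + k) c)"
    unfolding f_def using crd by (intro sum.cong refl) (simp add: wv_TV[OF V] Nb_index)
  also have "\<dots> = (\<Sum>c<dC. \<Sum>k<m. \<Sum>r<dR. f (r*m + k) c)" by (rule sum.swap)
  also have "\<dots> = (\<Sum>c<dC. \<Sum>s<dS. f s c)" unfolding dS_def by (rule sum.cong[OF refl], rule S_sum)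
  also have "\<dots> = tr (adj (Nb True) * (V * Nb False))"
    unfolding tr_def f_def using V Nb_carrier[of True] Nb_carrier[of False]
    by (intro sum.cong refl) (simp_all add: scalar_prod_def atLeast0LessThan)
  also have "adj (Nb True) * (V * Nb False) = adj (Nb True) * V * Nb False"
    using V Nb_carrier[of True] Nb_carrier[of False] by (simp add: massoc)
  finally show ?thesis .
qed

lemma p1_bound:
  assumes V: "V \<in> carrier_mat dS dS"
  shows "(cmod (tr (adj (Nb True) * V * Nb False)))^2 \<le>
     prob (Acc True) (kron (apply_ch (dC*dR) (on_second dC (Mt V F1 F2)) (apply_ch (dC*dS) [G] (proj \<psi>))) (proj \<psi>))"
proof -
  define DD where "DD = dC*dR*dA"
  define t where "t = (\<lambda>K I. wv K (I div dA) * \<psi> $ (I mod dA))"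
  have A1C: "Acc True \<in> carrier_mat DD DD" unfolding DD_def by (rule Acc_carrier)
  have psdA: "psd DD (Acc True)" and psdIA: "psd DD (1\<^sub>m DD - Acc True)"
    using acc[of True] unfolding povm_elem_def DD_def by auto
  have qf0: "0 \<le> Re (qf (Acc True) DD v)" for v using psdA unfolding psd_qf by auto
  have "prob (Acc True) (kron (apply_ch (dC*dR) (on_second dC (Mt V F1 F2)) (apply_ch (dC*dS) [G] (proj \<psi>))) (proj \<psi>))
     = Re (\<Sum>l<length (Mt V F1 F2). qf (Acc True) DD (t (Mt V F1 F2 ! l)))"
    unfolding mal_formula[OF Mt_carrier[OF V]] t_def DD_def
    by (rule prob_kron[OF Acc_carrier]) (use psi dA in auto)
  also have "\<dots> = Re (\<Sum>k<m. qf (Acc True) DD (t (T k * V))) +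
      (Re (\<Sum>l<dS. qf (Acc True) DD (t (rowop F1 l))) + Re (\<Sum>l<dC. qf (Acc True) DD (t (rowop F2 l))))"
    using Mt_sum[of "\<lambda>K. qf (Acc True) DD (t K)" V F1 F2] by simp
  finally have pe: "prob (Acc True) (kron (apply_ch (dC*dR) (on_second dC (Mt V F1 F2)) (apply_ch (dC*dS) [G] (proj \<psi>))) (proj \<psi>))
     = Re (\<Sum>k<m. qf (Acc True) DD (t (T k * V))) +
      (Re (\<Sum>l<dS. qf (Acc True) DD (t (rowop F1 l))) + Re (\<Sum>l<dC. qf (Acc True) DD (t (rowop F2 l))))" .
  have r1: "0 \<le> Re (\<Sum>l<dS. qf (Acc True) DD (t (rowop F1 l)))" using qf0 by (simp add: sum_nonneg)
  have r2: "0 \<le> Re (\<Sum>l<dC. qf (Acc True) DD (t (rowop F2 l)))" using qf0 by (simp add: sum_nonneg)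
  define x where "x = (\<lambda>k I. kv True k (I div dA) * \<psi> $ (I mod dA))"
  define y where "y = (\<lambda>k. t (T k * V))"
  have h1: "Re (bf (Acc True) DD m x x) = 1"
    unfolding bf_def qf_sf[symmetric] x_def DD_def by (rule corr')
  have h2: "(\<Sum>k<m. \<Sum>I<DD. (cmod (x k I))^2) = 1"
  proof -
    have "complex_of_real (\<Sum>k<m. \<Sum>I<DD. (cmod (x k I))^2) = (\<Sum>k<m. \<Sum>I<DD. cnj (x k I) * x k I)"
      by (simp only: cnj_mult_self of_real_sum)
    also have "\<dots> = (\<Sum>k<m. \<Sum>i<dC*dR. cnj (kv True k i) * kv True k i)"
      unfolding x_def DD_def by (simp only: tensor_inner)
    also have "\<dots> = complex_of_real (\<Sum>k<m. \<Sum>i<dC*dR. (cmod (kv True k i))^2)"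
      by (simp only: cnj_mult_self of_real_sum)
    finally show ?thesis using norm_sum[of True] by (simp only: of_real_eq_iff)
  qed
  have cs: "(cmod (\<Sum>k<m. \<Sum>I<DD. cnj (x k I) * y k I))^2 \<le> Re (bf (Acc True) DD m y y)"
    by (rule cs_fam[OF A1C psdA psdIA h1 h2])
  have "(\<Sum>k<m. \<Sum>I<DD. cnj (x k I) * y k I) = (\<Sum>k<m. \<Sum>i<dC*dR. cnj (kv True k i) * wv (T k * V) i)"
    unfolding x_def y_def t_def DD_def by (simp only: tensor_inner)
  also have "\<dots> = tr (adj (Nb True) * V * Nb False)" by (rule overlap[OF V])
  finally have "(cmod (tr (adj (Nb True) * V * Nb False)))^2 \<le> Re (\<Sum>k<m. qf (Acc True) DD (t (T k * V)))"
    using cs unfolding bf_def qf_sf[symmetric] y_def by simp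
  thus ?thesis unfolding pe using r1 r2 by simp
qed

lemma ptr_formula: assumes c: "c < dC" "c' < dC"
  shows "ptrace2 dC dR (apply_ch (dC*dR) (Ks b) (proj \<psi>)) $$ (c',c) = (adj (Nb b) * Nb b) $$ (c,c')"
proof -
  have "ptrace2 dC dR (apply_ch (dC*dR) (Ks b) (proj \<psi>)) $$ (c',c) =
      (\<Sum>r<dR. \<Sum>k<m. kv b k (c'*dR + r) * cnj (kv b k (c*dR + r)))"
    unfolding honest_formula using c crd by (simp add: ptrace_index)
  also have "\<dots> = (\<Sum>k<m. \<Sum>r<dR. cnj (Nb b $$ (r*m + k, c)) * Nb b $$ (r*m + k, c'))"
    by (subst sum.swap) (intro sum.cong refl, simp add: Nb_index c mult.commute)
  also have "\<dots> = (\<Sum>s<dS. cnj (Nb b $$ (s, c)) * Nb b $$ (s, c'))"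
    unfolding dS_def by (rule S_sum[where f="\<lambda>s. cnj (Nb b $$ (s, c)) * Nb b $$ (s, c')"])
  also have "\<dots> = (adj (Nb b) * Nb b) $$ (c,c')"
    using c Nb_carrier[of b] by (simp add: scalar_prod_def atLeast0LessThan)
  finally show ?thesis .
qed

lemma hide_prob: assumes Q: "Q \<in> carrier_mat dC dC"
  shows "prob (transpose_mat Q) (kron (1\<^sub>m 1) (ptrace2 dC dR (apply_ch (dC*dR) (Ks b) (proj \<psi>)))) =
     Re (tr (Q * (adj (Nb b) * Nb b)))"
proof -
  let ?P = "ptrace2 dC dR (apply_ch (dC*dR) (Ks b) (proj \<psi>))"
  have PC: "?P \<in> carrier_mat dC dC" by (rule carrier_matI) simp_all
  have "tr (transpose_mat Q * ?P) = (\<Sum>c<dC. \<Sum>c'<dC. Q $$ (c',c) * ?P $$ (c',c))"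
    unfolding tr_def using Q PC by (intro sum.cong refl) (simp_all add: scalar_prod_def atLeast0LessThan)
  also have "\<dots> = (\<Sum>c<dC. \<Sum>c'<dC. Q $$ (c',c) * (adj (Nb b) * Nb b) $$ (c,c'))"
    by (intro sum.cong refl) (simp add: ptr_formula)
  also have "\<dots> = (\<Sum>c'<dC. \<Sum>c<dC. Q $$ (c',c) * (adj (Nb b) * Nb b) $$ (c,c'))" by (rule sum.swap)
  also have "\<dots> = tr (Q * (adj (Nb b) * Nb b))"
  proof -
    define M where "M = adj (Nb b) * Nb b"
    have MC: "M \<in> carrier_mat dC dC" unfolding M_def using Nb_carrier[of b] by auto
    have "(\<Sum>c'<dC. \<Sum>c<dC. Q $$ (c',c) * M $$ (c,c')) = tr (Q * M)"
      unfolding tr_def using Q MC by (intro sum.cong refl) (simp_all add: scalar_prod_def atLeast0LessThan)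
    thus ?thesis unfolding M_def .
  qed
  finally show ?thesis unfolding prob_def kron_one1[OF PC] by simp
qed

lemma attack:
  "\<exists>dS' G' Mf Mt' D. 0 < dS' \<and> kraus dA (dC*dS') [G'] \<and> kraus dS' dR Mf \<and> kraus dS' dR Mt' \<and> povm_elem dC D \<and>
    prob (Acc False) (kron (apply_ch (dC*dR) (on_second dC Mf) (apply_ch (dC*dS') [G'] (proj \<psi>))) (proj \<psi>)) = 1 \<and>
    0 \<le> prob D (kron (1\<^sub>m 1) (ptrace2 dC dR (apply_ch (dC*dR) (Ks False) (proj \<psi>)))) -
         prob D (kron (1\<^sub>m 1) (ptrace2 dC dR (apply_ch (dC*dR) (Ks True) (proj \<psi>)))) \<and>
    (\<exists>r. 1 - (prob D (kron (1\<^sub>m 1) (ptrace2 dC dR (apply_ch (dC*dR) (Ks False) (proj \<psi>)))) -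
         prob D (kron (1\<^sub>m 1) (ptrace2 dC dR (apply_ch (dC*dR) (Ks True) (proj \<psi>))))) \<le> r \<and>
       r^2 \<le> prob (Acc True) (kron (apply_ch (dC*dR) (on_second dC Mt') (apply_ch (dC*dS') [G'] (proj \<psi>))) (proj \<psi>)))"
proof -
  obtain V Q F1 F2 where V: "V \<in> carrier_mat dS dS" and F1: "F1 \<in> carrier_mat dS dS" and F2: "F2 \<in> carrier_mat dC dS"
    and QC: "Q \<in> carrier_mat dC dC" and psdQ: "psd dC Q" and psdIQ: "psd dC (1\<^sub>m dC - Q)"
    and sum1: "adj V * V + adj F1 * F1 + adj F2 * F2 = 1\<^sub>m dS"
    and d0: "0 \<le> Re (tr (Q * (adj (Nb False) * Nb False - adj (Nb True) * Nb True)))"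
    and ov: "1 - Re (tr (Q * (adj (Nb False) * Nb False - adj (Nb True) * Nb True))) \<le> Re (tr (adj (Nb True) * V * Nb False))"
    using core[OF Nb_carrier Nb_carrier trN trN] by blast
  define D where "D = transpose_mat Q"
  have povm: "povm_elem dC D"
  proof -
    have e: "1\<^sub>m dC - D = transpose_mat (1\<^sub>m dC - Q)" unfolding D_def using QC by (intro eq_matI) auto
    show ?thesis unfolding povm_elem_def e unfolding D_def using psd_transpose[OF psdQ] psd_transpose[OF psdIQ] by blast
  qed
  have delta: "prob D (kron (1\<^sub>m 1) (ptrace2 dC dR (apply_ch (dC*dR) (Ks False) (proj \<psi>)))) -
         prob D (kron (1\<^sub>m 1) (ptrace2 dC dR (apply_ch (dC*dR) (Ks True) (proj \<psi>))))
     = Re (tr (Q * (adj (Nb False) * Nb False - adj (Nb True) * Nb True)))"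
  proof -
    have "tr (Q * (adj (Nb False) * Nb False - adj (Nb True) * Nb True)) =
       tr (Q * (adj (Nb False) * Nb False)) - tr (Q * (adj (Nb True) * Nb True))"
      using QC Nb_carrier[of False] Nb_carrier[of True]
      by (simp add: mdistl_minus tr_minus')
    thus ?thesis unfolding D_def hide_prob[OF QC] by simp
  qed
  have p1: "(Re (tr (adj (Nb True) * V * Nb False)))^2 \<le>
     prob (Acc True) (kron (apply_ch (dC*dR) (on_second dC (Mt V F1 F2)) (apply_ch (dC*dS) [G] (proj \<psi>))) (proj \<psi>))"
  proof -
    have a: "\<bar>Re (tr (adj (Nb True) * V * Nb False))\<bar> \<le> cmod (tr (adj (Nb True) * V * Nb False))"
      by (rule abs_Re_le_cmod)
    have "\<bar>Re (tr (adj (Nb True) * V * Nb False))\<bar>^2 \<le> (cmod (tr (adj (Nb True) * V * Nb False)))^2"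
      by (rule power_mono[OF a]) simp
    hence "(Re (tr (adj (Nb True) * V * Nb False)))^2 \<le> (cmod (tr (adj (Nb True) * V * Nb False)))^2"
      by (simp only: power2_abs)
    thus ?thesis using p1_bound[OF V, of F1 F2] by linarith
  qed
  show ?thesis
    apply (rule exI[of _ dS], rule exI[of _ G], rule exI[of _ "map T [0..<m]"], rule exI[of _ "Mt V F1 F2"], rule exI[of _ D])
    unfolding delta
    apply (intro conjI)
    using dS_pos G_kraus T_kraus Mt_kraus[OF V F1 F2 sum1] povm p0 d0 apply (simp_all only:)
    apply (rule exI[of _ "Re (tr (adj (Nb True) * V * Nb False))"])
    using ov p1 by (intro conjI)
qed

end

lemma psd_one1: "psd 1 (1\<^sub>m 1)"
  unfolding psd_qf qf_def by (auto simp: cnj_mult_self)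

lemma choice5:
  assumes h: "\<forall>n. \<exists>a b c d e. P n a b c d e"
  shows "\<exists>fa fb fc fd fe. \<forall>n. P n (fa n) (fb n) (fc n) (fd n) (fe n)"
proof -
  have "\<forall>n. \<exists>t. P n (fst t) (fst (snd t)) (fst (snd (snd t))) (fst (snd (snd (snd t)))) (snd (snd (snd (snd t))))"
  proof
    fix n
    from h obtain a b c d e where "P n a b c d e" by blast
    thus "\<exists>t. P n (fst t) (fst (snd t)) (fst (snd (snd t))) (fst (snd (snd (snd t)))) (snd (snd (snd (snd t))))"
      by (intro exI[of _ "(a,b,c,d,e)"]) simp
  qed
  then obtain f where f: "\<forall>n. P n (fst (f n)) (fst (snd (f n))) (fst (snd (snd (f n)))) (fst (snd (snd (snd (f n))))) (snd (snd (snd (snd (f n)))))"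
    using choice[of "\<lambda>n t. P n (fst t) (fst (snd t)) (fst (snd (snd t))) (fst (snd (snd (snd t)))) (snd (snd (snd (snd t))))"] by blast
  show ?thesis
    by (rule exI[of _ "\<lambda>n. fst (f n)"], rule exI[of _ "\<lambda>n. fst (snd (f n))"], rule exI[of _ "\<lambda>n. fst (snd (snd (f n)))"],
        rule exI[of _ "\<lambda>n. fst (snd (snd (snd (f n))))"], rule exI[of _ "\<lambda>n. snd (snd (snd (snd (f n))))"]) (use f in simp)
qed

theorem theorem5p10:
  shows "\<not> (\<exists>nA nC nR aux Com Acc.
            qaux_commitment nA nC nR aux Com Acc \<and>
            stat_hiding nA nC nR aux Com \<and>
            stat_sum_binding nA nC nR aux Acc)"
proof
  assume "\<exists>nA nC nR aux Com Acc. qaux_commitment nA nC nR aux Com Acc \<and> stat_hiding nA nC nR aux Com \<and>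
            stat_sum_binding nA nC nR aux Acc"
  then obtain nA nC nR aux Com Acc where Q: "qaux_commitment nA nC nR aux Com Acc"
    and H: "stat_hiding nA nC nR aux Com" and B: "stat_sum_binding nA nC nR aux Acc" by blast
  have inst: "att (2 ^ nA n) (2 ^ nC n) (2 ^ nR n) (aux n) (\<lambda>b. Com b n) (\<lambda>b. Acc b n)" for n
  proof
    show "0 < (2::nat) ^ nA n" "0 < (2::nat) ^ nC n" "0 < (2::nat) ^ nR n" by simp_all
    have u: "unit_state (2 ^ nA n) (aux n)" using Q unfolding qaux_commitment_def by blast
    show "aux n \<in> carrier_vec (2 ^ nA n)" "(\<Sum>i<2 ^ nA n. (cmod (aux n $ i))^2) = 1"
      using u unfolding unit_state_def by auto
    show "kraus (2 ^ nA n) (2 ^ nC n * 2 ^ nR n) (Com b n)" for b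
      using Q unfolding qaux_commitment_def by blast
    show "povm_elem (2 ^ nC n * 2 ^ nR n * 2 ^ nA n) (Acc b n)" for b
      using Q unfolding qaux_commitment_def by blast
    show "prob (Acc b n) (kron (apply_ch (2 ^ nC n * 2 ^ nR n) (Com b n) (proj (aux n))) (proj (aux n))) = 1" for b
      using Q unfolding qaux_commitment_def honest_state_def by blast
  qed
  define ms where "ms = (\<lambda>n dS' G' M. apply_ch (2 ^ nC n * 2 ^ nR n) (on_second (2 ^ nC n) M)
       (apply_ch (2 ^ nC n * dS') [G'] (proj (aux n))))"
  define del where "del = (\<lambda>n D. prob D (kron (1\<^sub>m 1) (ptrace2 (2 ^ nC n) (2 ^ nR n) (honest_state nC nR aux Com False n))) -
         prob D (kron (1\<^sub>m 1) (ptrace2 (2 ^ nC n) (2 ^ nR n) (honest_state nC nR aux Com True n))))"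
  define PP where "PP = (\<lambda>n dS' G' Mf Mt' D. 0 < dS' \<and> kraus (2 ^ nA n) (2 ^ nC n * dS') [G'] \<and> kraus dS' (2 ^ nR n) Mf \<and>
     kraus dS' (2 ^ nR n) Mt' \<and> povm_elem (2 ^ nC n) D \<and>
     prob (Acc False n) (kron (ms n dS' G' Mf) (proj (aux n))) = 1 \<and> 0 \<le> del n D \<and>
     (\<exists>r. 1 - del n D \<le> r \<and> r^2 \<le> prob (Acc True n) (kron (ms n dS' G' Mt') (proj (aux n)))))"
  have "\<forall>n. \<exists>dS' G' Mf Mt' D. PP n dS' G' Mf Mt' D"
  proof
    fix n
    show "\<exists>dS' G' Mf Mt' D. PP n dS' G' Mf Mt' D"
      unfolding PP_def ms_def del_def honest_state_def using att.attack[OF inst[of n]] .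
  qed
  then obtain dSf Gf Mff Mtf Df where PPn: "\<forall>n. PP n (dSf n) (Gf n) (Mff n) (Mtf n) (Df n)"
    using choice5[of PP] by blast
  have P: "\<And>n. 0 < dSf n \<and> kraus (2 ^ nA n) (2 ^ nC n * dSf n) [Gf n] \<and> kraus (dSf n) (2 ^ nR n) (Mff n) \<and>
     kraus (dSf n) (2 ^ nR n) (Mtf n) \<and> povm_elem (2 ^ nC n) (Df n) \<and>
     prob (Acc False n) (kron (ms n (dSf n) (Gf n) (Mff n)) (proj (aux n))) = 1 \<and> 0 \<le> del n (Df n) \<and>
     (\<exists>r. 1 - del n (Df n) \<le> r \<and> r^2 \<le> prob (Acc True n) (kron (ms n (dSf n) (Gf n) (Mtf n)) (proj (aux n))))"
    using PPn unfolding PP_def by blast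
  have negd: "negl (\<lambda>n. del n (Df n))"
  proof -
    have f1: "polybounded (\<lambda>_. 0)" unfolding polybounded_def by auto
    have f2: "density (2 ^ 0) (1\<^sub>m 1)" for n :: nat unfolding density_def using psd_one1 by (simp add: tr_def)
    have f3: "povm_elem (2 ^ 0 * 2 ^ nC n) (Df n)" for n using P by simp
    have "negl (\<lambda>n. prob (Df n) (kron (1\<^sub>m 1) (ptrace2 (2 ^ nC n) (2 ^ nR n) (honest_state nC nR aux Com False n))) -
         prob (Df n) (kron (1\<^sub>m 1) (ptrace2 (2 ^ nC n) (2 ^ nR n) (honest_state nC nR aux Com True n))))"
      using H[unfolded stat_hiding_def, rule_format, of "\<lambda>_. 0" "\<lambda>_. 1\<^sub>m 1" Df, OF f1 f2 f3] .
    thus ?thesis unfolding del_def .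
  qed
  define MRev where "MRev = (\<lambda>b n. if b then Mtf n else Mff n)"
  obtain \<epsilon> where ne: "negl \<epsilon>" and bnd: "\<And>n. prob (Acc False n) (kron (mal_state nC nR aux dSf (\<lambda>n. [Gf n]) MRev False n) (proj (aux n)))
              + prob (Acc True n) (kron (mal_state nC nR aux dSf (\<lambda>n. [Gf n]) MRev True n) (proj (aux n)))
              \<le> 1 + \<epsilon> n"
  proof -
    have "\<forall>n. 0 < dSf n" "\<forall>n. kraus (2 ^ nA n) (2 ^ nC n * dSf n) [Gf n]" "\<forall>b n. kraus (dSf n) (2 ^ nR n) (MRev b n)"
      using P unfolding MRev_def by auto
    hence "\<exists>\<epsilon>. negl \<epsilon> \<and> (\<forall>n. prob (Acc False n) (kron (mal_state nC nR aux dSf (\<lambda>n. [Gf n]) MRev False n) (proj (aux n)))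
              + prob (Acc True n) (kron (mal_state nC nR aux dSf (\<lambda>n. [Gf n]) MRev True n) (proj (aux n)))
              \<le> 1 + \<epsilon> n)"
      using B[unfolded stat_sum_binding_def, rule_format, of dSf "\<lambda>n. [Gf n]" MRev] by blast
    thus ?thesis using that by blast
  qed
  have p1le: "prob (Acc True n) (kron (ms n (dSf n) (Gf n) (Mtf n)) (proj (aux n))) \<le> \<epsilon> n" for n
  proof -
    have "mal_state nC nR aux dSf (\<lambda>n. [Gf n]) MRev False n = ms n (dSf n) (Gf n) (Mff n)"
         "mal_state nC nR aux dSf (\<lambda>n. [Gf n]) MRev True n = ms n (dSf n) (Gf n) (Mtf n)"
      unfolding mal_state_def ms_def MRev_def by simp_all
    thus ?thesis using bnd[of n] P[of n] by simp
  qed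
  have ev1: "eventually (\<lambda>n. \<bar>del n (Df n)\<bar> \<le> 1 / real n ^ 1) sequentially" using negd unfolding negl_def by blast
  have ev2: "eventually (\<lambda>n. \<bar>\<epsilon> n\<bar> \<le> 1 / real n ^ 1) sequentially" using ne unfolding negl_def by blast
  have ev3: "eventually (\<lambda>n. 4 \<le> n) sequentially" by (rule eventually_ge_at_top)
  obtain n where n1: "\<bar>del n (Df n)\<bar> \<le> 1 / real n" and n2: "\<bar>\<epsilon> n\<bar> \<le> 1 / real n" and n3: "4 \<le> n"
    using eventually_happens[OF eventually_conj[OF ev1 eventually_conj[OF ev2 ev3]]] by auto
  have q: "1 / real n \<le> 1 / 4" using n3 by (simp add: field_simps)
  obtain r where r1: "1 - del n (Df n) \<le> r" and r2: "r^2 \<le> prob (Acc True n) (kron (ms n (dSf n) (Gf n) (Mtf n)) (proj (aux n)))"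
    using P[of n] by blast
  have "3/4 \<le> r" using r1 n1 q by linarith
  hence "(3/4)^2 \<le> r^2" by (rule power_mono) simp
  hence "(3/4)^2 \<le> \<epsilon> n" using r2 p1le[of n] by linarith
  thus False using n2 q by (simp add: power2_eq_square)
qed

end
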